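(* Let $(L^+,L^-)$ be a pair of fully transverse prelaminations of $S^1$. For any nontrivial complementary region $C$ of $L^\pm$, the linkage graph $\Gamma(C;L^\mp)$ is connected.
   Context: $\mathbb D^2$ is the closed unit disc with boundary $S^1$. Pairs $\{a_1,a_2\},\{b_1,b_2\}$ of distinct points of $S^1$ cross if $a_1,a_2$ lie in different components of $S^1\setminus\{b_1,b_2\}$. A prelamination is a set of unordered pairs of distinct points of $S^1$ (leaves) no two crossing; $\mathrm{Geo}(L)$ is the union of Euclidean chords joining endpoints of leaves. $(L^+,L^-)$ is fully transverse if $L^+\cap L^-=\emptyset$, endpoints of $L^+\cup L^-$ are dense in $S^1$, and any two leaves of $L^+\cup L^-$ are joined by a finite chain of leaves each crossing the next. A complementary region of $L$ is the closure of a component of $\mathbb D^2\setminus\mathrm{Geo}(L)$; nontrivial if it is not a single chord; its boundary chords are its geodesic sides. For a nontrivial complementary region $C$ of $L^\pm$, an ideal segment of $C$ is a compact arc $I\subset S^1$ with nonempty interior such that for a single geodesic side $\alpha$ of $C$ the endpoints of $L^\mp$-leaves crossing $\alpha$ are dense in the interior of $I$, and $I$ is maximal with this property. The linkage graph $\Gamma(C;L^\mp)$ has as vertices the geodesic sides and the ideal segments of $C$; two distinct vertices are joined by an edge if some leaf of $L^\mp$ intersects both, where intersecting a geodesic side means crossing that chord and intersecting an ideal segment means having an endpoint in its interior. *)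

theory Defs
  imports "HOL-Analysis.Analysis"
begin

abbreviation S1 :: "complex set" where "S1 \<equiv> sphere 0 1"
abbreviation D2 :: "complex set" where "D2 \<equiv> cball 0 1"

definition is_leaf :: "complex set \<Rightarrow> bool" where
  "is_leaf l \<longleftrightarrow> (\<exists>a b. a \<noteq> b \<and> a \<in> S1 \<and> b \<in> S1 \<and> l = {a, b})"

definition crosses :: "complex set \<Rightarrow> complex set \<Rightarrow> bool" where
  "crosses l m \<longleftrightarrow> is_leaf l \<and> is_leaf m \<and>
     (\<exists>a1 a2. l = {a1, a2} \<and> a1 \<in> S1 - m \<and> a2 \<in> S1 - m \<and>
        \<not> connected_component (S1 - m) a1 a2)"

definition prelamination :: "complex set set \<Rightarrow> bool" where
  "prelamination L \<longleftrightarrow> (\<forall>l\<in>L. is_leaf l) \<and> (\<forall>l\<in>L. \<forall>m\<in>L. \<not> crosses l m)"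

definition Geo :: "complex set set \<Rightarrow> complex set" where
  "Geo L = \<Union>{closed_segment a b | a b. {a, b} \<in> L}"

definition fully_transverse :: "complex set set \<Rightarrow> complex set set \<Rightarrow> bool" where
  "fully_transverse Lp Lm \<longleftrightarrow> prelamination Lp \<and> prelamination Lm \<and> Lp \<inter> Lm = {} \<and>
     S1 \<subseteq> closure (\<Union>(Lp \<union> Lm)) \<and>
     (\<forall>l\<in>Lp \<union> Lm. \<forall>m\<in>Lp \<union> Lm.
        (\<lambda>x y. x \<in> Lp \<union> Lm \<and> y \<in> Lp \<union> Lm \<and> crosses x y)\<^sup>*\<^sup>* l m)"

definition compl_region :: "complex set set \<Rightarrow> complex set \<Rightarrow> bool" where
  "compl_region L C \<longleftrightarrow>
     (\<exists>x \<in> D2 - Geo L. C = closure (connected_component_set (D2 - Geo L) x))"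

definition nontrivial_region :: "complex set set \<Rightarrow> complex set \<Rightarrow> bool" where
  "nontrivial_region L C \<longleftrightarrow> compl_region L C \<and>
     \<not> (\<exists>a b. a \<noteq> b \<and> a \<in> S1 \<and> b \<in> S1 \<and> C = closed_segment a b)"

definition geodesic_side :: "complex set \<Rightarrow> complex set \<Rightarrow> bool" where
  "geodesic_side C s \<longleftrightarrow>
     (\<exists>a b. a \<noteq> b \<and> a \<in> S1 \<and> b \<in> S1 \<and> s = {a, b} \<and> closed_segment a b \<subseteq> frontier C)"

definition compact_arc :: "complex set \<Rightarrow> bool" where
  "compact_arc I \<longleftrightarrow> (\<exists>g. arc g \<and> path_image g = I) \<and> I \<subseteq> S1"

definition int_S1 :: "complex set \<Rightarrow> complex set" where
  "int_S1 I = (top_of_set S1) interior_of I"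

definition cross_endpoints :: "complex set set \<Rightarrow> complex set \<Rightarrow> complex set" where
  "cross_endpoints L' s = \<Union>{l \<in> L'. crosses l s}"

definition dense_arc_for :: "complex set set \<Rightarrow> complex set \<Rightarrow> complex set \<Rightarrow> bool" where
  "dense_arc_for L' s I \<longleftrightarrow> compact_arc I \<and> int_S1 I \<noteq> {} \<and>
     int_S1 I \<subseteq> closure (cross_endpoints L' s \<inter> int_S1 I)"

definition ideal_segment :: "complex set \<Rightarrow> complex set set \<Rightarrow> complex set \<Rightarrow> bool" where
  "ideal_segment C L' I \<longleftrightarrow>
     (\<exists>s. geodesic_side C s \<and> dense_arc_for L' s I \<and>
          (\<forall>J. I \<subseteq> J \<and> dense_arc_for L' s J \<longrightarrow> J = I))"

definition linkage_vertex :: "complex set \<Rightarrow> complex set set \<Rightarrow> complex set + complex set \<Rightarrow> bool" where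
  "linkage_vertex C L' v \<longleftrightarrow> (case v of Inl s \<Rightarrow> geodesic_side C s | Inr I \<Rightarrow> ideal_segment C L' I)"

definition leaf_meets :: "complex set \<Rightarrow> complex set + complex set \<Rightarrow> bool" where
  "leaf_meets l v \<longleftrightarrow> (case v of Inl s \<Rightarrow> crosses l s | Inr I \<Rightarrow> l \<inter> int_S1 I \<noteq> {})"

definition linkage_edge :: "complex set \<Rightarrow> complex set set \<Rightarrow>
    complex set + complex set \<Rightarrow> complex set + complex set \<Rightarrow> bool" where
  "linkage_edge C L' u v \<longleftrightarrow> linkage_vertex C L' u \<and> linkage_vertex C L' v \<and> u \<noteq> v \<and>
     (\<exists>l\<in>L'. leaf_meets l u \<and> leaf_meets l v)"

definition linkage_connected :: "complex set \<Rightarrow> complex set set \<Rightarrow> bool" where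
  "linkage_connected C L' \<longleftrightarrow>
     (\<forall>u v. linkage_vertex C L' u \<and> linkage_vertex C L' v \<longrightarrow> (linkage_edge C L')\<^sup>*\<^sup>* u v)"

end

theory Submission
  imports Defs "HOL-Analysis.Analysis"
begin

definition F :: "complex \<Rightarrow> complex \<Rightarrow> complex \<Rightarrow> real" where
  "F a b z = Im ((z - a) * cnj (b - a))"

lemma trig_aux: "sin (2*(x-y)) - sin (2*x) + sin (2*y) = 4 * sin x * sin y * sin (x - y::real)"
proof -
  have 1: "sin (2*x) - sin (2*y) = 2 * cos (x+y) * sin (x-y)"
    using sin_diff_sin[of "2*x" "2*y"] by (simp add: algebra_simps add_divide_distrib diff_divide_distrib)
  have 2: "sin (2*(x-y)) = 2 * sin (x-y) * cos (x-y)" by (rule sin_double)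
  have 3: "cos (x-y) - cos (x+y) = 2 * sin x * sin y" by (simp add: cos_diff cos_add)
  have "sin (2*(x-y)) - sin (2*x) + sin (2*y) = 2 * sin (x-y) * (cos (x-y) - cos (x+y))"
    using 1 2 by (simp add: algebra_simps)
  also have "\<dots> = 4 * sin x * sin y * sin (x - y)" using 3 by simp
  finally show ?thesis .
qed

lemma F_trig: "F (cis s) (cis t) (cis r) = 4 * sin ((r-s)/2) * sin ((t-s)/2) * sin ((r-t)/2)"
proof -
  have "F (cis s) (cis t) (cis r) = sin (r - t) - sin (r - s) + sin (t - s)"
    unfolding F_def by (simp add: algebra_simps cis_mult cis_cnj sin_diff cos_diff)
  also have "\<dots> = sin (2*((r-s)/2-(t-s)/2)) - sin (2*((r-s)/2)) + sin (2*((t-s)/2))"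
    by (simp add: algebra_simps diff_divide_distrib)
  also have "\<dots> = 4 * sin ((r-s)/2) * sin ((t-s)/2) * sin ((r-s)/2 - (t-s)/2)"
    by (rule trig_aux)
  also have "(r-s)/2 - (t-s)/2 = (r-t)/2" by (simp add: field_simps)
  finally show ?thesis .
qed

lemma F_swap: "F b a z = - F a b z"
  unfolding F_def by (simp add: algebra_simps)
lemma F_left [simp]: "F a b a = 0" and F_right [simp]: "F a b b = 0"
  unfolding F_def by (auto simp: algebra_simps)

lemma F_comb: "F a b ((1 - u) *\<^sub>R p + u *\<^sub>R q) = (1 - u) * F a b p + u * F a b q"
  unfolding F_def scaleR_conv_of_real by (simp add: algebra_simps)

lemma F_rot: "norm w = 1 \<Longrightarrow> F (w*a) (w*b) (w*z) = F a b z"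
proof -
  assume "norm w = 1"
  then have 1: "w * cnj w = 1" using complex_norm_square[of w] by simp
  have "(w*z - w*a) * cnj (w*b - w*a) = (w * cnj w) * ((z - a) * cnj (b - a))"
    by (simp add: algebra_simps)
  then show ?thesis unfolding F_def using 1 by simp
qed

lemma continuous_F [continuous_intros]: "continuous_on S (F a b)"
  unfolding F_def by (intro continuous_intros)

lemma sgn_sin_half: "-2*pi < x \<Longrightarrow> x < 2*pi \<Longrightarrow> sgn (sin (x/2)) = sgn x"
proof -
  assume a: "-2*pi < x" "x < 2*pi"
  consider "x > 0" | "x = 0" | "x < 0" by linarith
  then show ?thesis
  proof cases
    case 1 then have "sin (x/2) > 0" using a by (intro sin_gt_zero) auto
    then show ?thesis using 1 by simp
  next
    case 3 then have "sin (-x/2) > 0" using a by (intro sin_gt_zero) auto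
    then show ?thesis using 3 by simp
  qed simp
qed

lemma sgn_F_cis:
  assumes "s \<in> {-pi<..pi}" "t \<in> {-pi<..pi}" "r \<in> {-pi<..pi}"
  shows "sgn (F (cis s) (cis t) (cis r)) = sgn ((r-s)*(t-s)*(r-t))"
proof -
  have "sgn (F (cis s) (cis t) (cis r)) = sgn (4::real) * sgn (sin ((r-s)/2)) * sgn (sin ((t-s)/2)) * sgn (sin ((r-t)/2))"
    unfolding F_trig by (simp only: sgn_mult)
  also have "\<dots> = sgn (r-s) * sgn (t-s) * sgn (r-t)"
  proof -
    have "-2*pi < r-s" "r-s < 2*pi" "-2*pi < t-s" "t-s < 2*pi" "-2*pi < r-t" "r-t < 2*pi"
      using assms by auto
    then show ?thesis by (simp add: sgn_sin_half)
  qed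
  also have "\<dots> = sgn ((r-s)*(t-s)*(r-t))" by (simp only: sgn_mult)
  finally show ?thesis .
qed

lemma S1_cis: "z \<in> S1 \<Longrightarrow> cis (Arg z) = z"
proof -
  assume "z \<in> S1"
  then have n: "norm z = 1" by simp
  then have "z \<noteq> 0" by auto
  then have "cis (Arg z) = sgn z" by (rule cis_Arg)
  also have "\<dots> = z" using n by (simp add: sgn_div_norm)
  finally show ?thesis .
qed

lemma Arg_range: "Arg z \<in> {-pi<..pi}"
  using mpi_less_Arg[of z] Arg_le_pi[of z] by simp

lemma S1_eq_iff: assumes "a \<in> S1" "b \<in> S1" shows "a = b \<longleftrightarrow> Arg a = Arg b"
  by (metis S1_cis assms)

lemma sgn_F_S1:
  assumes "a \<in> S1" "b \<in> S1" "z \<in> S1"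
  shows "sgn (F a b z) = sgn ((Arg z - Arg a)*(Arg b - Arg a)*(Arg z - Arg b))"
proof -
  have "sgn (F (cis (Arg a)) (cis (Arg b)) (cis (Arg z))) = sgn ((Arg z - Arg a)*(Arg b - Arg a)*(Arg z - Arg b))"
    by (rule sgn_F_cis[OF Arg_range Arg_range Arg_range])
  then show ?thesis using assms by (simp only: S1_cis)
qed

lemma sgn3: "x*y*z < (0::real) \<longleftrightarrow> sgn x * sgn y * sgn z = -1"
proof -
  have "x*y*z < 0 \<longleftrightarrow> sgn (x*y*z) = -1"
    by (cases "x*y*z" "0::real" rule: linorder_cases) (auto simp: sgn_real_def)
  then show ?thesis by (simp only: sgn_mult)
qed
lemma prod3_neg: "(r - s)*(t - s)*(r - t) < (0::real) \<longleftrightarrow>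
   (s < t \<and> s < r \<and> r < t) \<or> (t < s \<and> (r < t \<or> s < r))"
  unfolding sgn3 by (cases "r < s"; cases "r = s"; cases "t < s"; cases "t=s"; cases "r < t"; cases "r = t") (auto simp: sgn_real_def)

lemma sgn_neg_iff: "sgn (x::real) = -1 \<longleftrightarrow> x < 0"
  by (cases x "0::real" rule: linorder_cases) (auto simp: sgn_real_def)

lemma F_S1_neg:
  assumes "a \<in> S1" "b \<in> S1" "z \<in> S1"
  shows "F a b z < 0 \<longleftrightarrow> (Arg a < Arg b \<and> Arg a < Arg z \<and> Arg z < Arg b) \<or>
     (Arg b < Arg a \<and> (Arg z < Arg b \<or> Arg a < Arg z))"
proof -
  have "F a b z < 0 \<longleftrightarrow> (Arg z - Arg a)*(Arg b - Arg a)*(Arg z - Arg b) < 0"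
    using sgn_F_S1[OF assms] sgn_neg_iff by metis
  then show ?thesis using prod3_neg by simp
qed

lemma F_S1_pos:
  assumes "a \<in> S1" "b \<in> S1" "z \<in> S1"
  shows "F a b z > 0 \<longleftrightarrow> (Arg b < Arg a \<and> Arg b < Arg z \<and> Arg z < Arg a) \<or>
     (Arg a < Arg b \<and> (Arg z < Arg a \<or> Arg b < Arg z))"
proof -
  have "F a b z > 0 \<longleftrightarrow> F b a z < 0" using F_swap[of a b z] by linarith
  then show ?thesis using F_S1_neg[of b a z] assms by simp
qed

lemma F_S1_zero:
  assumes "a \<in> S1" "b \<in> S1" "z \<in> S1"
  shows "F a b z = 0 \<longleftrightarrow> z = a \<or> z = b \<or> a = b"
proof -
  have "F a b z = 0 \<longleftrightarrow> \<not> F a b z < 0 \<and> \<not> F a b z > 0" by auto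
  also have "\<dots> \<longleftrightarrow> Arg z = Arg a \<or> Arg z = Arg b \<or> Arg a = Arg b"
    unfolding F_S1_neg[OF assms] F_S1_pos[OF assms] by auto
  finally show ?thesis using S1_eq_iff assms by auto
qed

lemma F_S1_neg': "a \<in> S1 \<Longrightarrow> b \<in> S1 \<Longrightarrow> z \<in> S1 \<Longrightarrow> F a b z < 0 \<longleftrightarrow> (Arg a < Arg b \<and> Arg a < Arg z \<and> Arg z < Arg b) \<or>
     (Arg b < Arg a \<and> (Arg z < Arg b \<or> Arg a < Arg z))" by (rule F_S1_neg)

lemma F_S1_le:
  assumes "a \<in> S1" "b \<in> S1" "z \<in> S1"
  shows "F a b z \<le> 0 \<longleftrightarrow> \<not> ((Arg b < Arg a \<and> Arg b < Arg z \<and> Arg z < Arg a) \<or>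
     (Arg a < Arg b \<and> (Arg z < Arg a \<or> Arg b < Arg z)))"
  using F_S1_pos[OF assms] by linarith

lemma F_S1_ge:
  assumes "a \<in> S1" "b \<in> S1" "z \<in> S1"
  shows "F a b z \<ge> 0 \<longleftrightarrow> \<not> ((Arg a < Arg b \<and> Arg a < Arg z \<and> Arg z < Arg b) \<or>
     (Arg b < Arg a \<and> (Arg z < Arg b \<or> Arg a < Arg z)))"
  using F_S1_neg[OF assms] by linarith

lemma S1_neq: "a \<in> S1 \<Longrightarrow> b \<in> S1 \<Longrightarrow> a \<noteq> b \<longleftrightarrow> Arg a \<noteq> Arg b"
  using S1_eq_iff by blast

lemma cross_sym:
  assumes S: "a \<in> S1" "b \<in> S1" "p \<in> S1" "q \<in> S1" and "a \<noteq> b" "p \<noteq> q"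
  shows "F a b p * F a b q < 0 \<longleftrightarrow> F p q a * F p q b < 0"
proof -
  have d: "Arg a \<noteq> Arg b" "Arg p \<noteq> Arg q" using assms S1_neq by auto
  show ?thesis
    unfolding mult_less_0_iff F_S1_neg[OF S(1,2,3)] F_S1_neg[OF S(1,2,4)]
      F_S1_pos[OF S(1,2,3)] F_S1_pos[OF S(1,2,4)]
      F_S1_neg[OF S(3,4,1)] F_S1_neg[OF S(3,4,2)]
      F_S1_pos[OF S(3,4,1)] F_S1_pos[OF S(3,4,2)]
    using d by smt
qed

lemma cap_cross:
  assumes S: "a \<in> S1" "b \<in> S1" "z1 \<in> S1" "z2 \<in> S1" "p \<in> S1" "q \<in> S1"
    and "a \<noteq> b" "z1 \<noteq> z2" "F a b z1 \<le> 0" "F a b z2 \<le> 0" "F z1 z2 p * F z1 z2 q < 0"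
  shows "F a b p < 0 \<or> F a b q < 0"
proof -
  have d: "Arg a \<noteq> Arg b" "Arg z1 \<noteq> Arg z2" using assms S1_neq by auto
  show ?thesis using assms(9-11) d
    unfolding mult_less_0_iff F_S1_neg[OF S(1,2,5)] F_S1_neg[OF S(1,2,6)]
      F_S1_le[OF S(1,2,3)] F_S1_le[OF S(1,2,4)]
      F_S1_neg[OF S(3,4,5)] F_S1_neg[OF S(3,4,6)]
      F_S1_pos[OF S(3,4,5)] F_S1_pos[OF S(3,4,6)]
    by smt
qed

lemma caps_disjoint:
  assumes S: "a \<in> S1" "b \<in> S1" "c \<in> S1" "d \<in> S1" "z \<in> S1"
    and "a \<noteq> b" "c \<noteq> d" "{a,b} \<noteq> {c,d}"
    and "F a b c \<ge> 0" "F a b d \<ge> 0" "F c d a \<ge> 0" "F c d b \<ge> 0" "F a b z < 0"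
  shows "F c d z > 0"
proof -
  have d: "Arg a \<noteq> Arg b" "Arg c \<noteq> Arg d" using assms S1_neq by auto
  have e: "\<not> (Arg a = Arg c \<and> Arg b = Arg d) \<and> \<not> (Arg a = Arg d \<and> Arg b = Arg c)"
    using assms(8) S1_eq_iff S by auto
  show ?thesis using assms(9-13) d e
    unfolding F_S1_ge[OF S(1,2,3)] F_S1_ge[OF S(1,2,4)] F_S1_ge[OF S(3,4,1)] F_S1_ge[OF S(3,4,2)]
      F_S1_neg[OF S(1,2,5)] F_S1_pos[OF S(3,4,5)]
    by smt
qed

lemma same_side_cap:
  assumes S: "a \<in> S1" "b \<in> S1" "w1 \<in> S1" "w2 \<in> S1" "p \<in> S1"
    and "a \<noteq> b" "w1 \<noteq> w2" "F a b w1 \<ge> 0" "F a b w2 \<ge> 0" "F a b p < 0"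
  shows "F w1 w2 p * F w1 w2 a \<ge> 0" "F w1 w2 p * F w1 w2 b \<ge> 0"
proof -
  have d: "Arg a \<noteq> Arg b" "Arg w1 \<noteq> Arg w2" using assms S1_neq by auto
  have n: "\<not> (x * y < 0) \<Longrightarrow> x * y \<ge> (0::real)" for x y by linarith
  show "F w1 w2 p * F w1 w2 a \<ge> 0"
    apply (rule n)
    using assms(8-10) d
    unfolding mult_less_0_iff F_S1_ge[OF S(1,2,3)] F_S1_ge[OF S(1,2,4)] F_S1_neg[OF S(1,2,5)]
      F_S1_neg[OF S(3,4,5)] F_S1_pos[OF S(3,4,5)] F_S1_neg[OF S(3,4,1)] F_S1_pos[OF S(3,4,1)]
    by smt
  show "F w1 w2 p * F w1 w2 b \<ge> 0"
    apply (rule n)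
    using assms(8-10) d
    unfolding mult_less_0_iff F_S1_ge[OF S(1,2,3)] F_S1_ge[OF S(1,2,4)] F_S1_neg[OF S(1,2,5)]
      F_S1_neg[OF S(3,4,5)] F_S1_pos[OF S(3,4,5)] F_S1_neg[OF S(3,4,2)] F_S1_pos[OF S(3,4,2)]
    by smt
qed

lemma conn_sign:
  fixes f :: "'a::topological_space \<Rightarrow> real"
  assumes "connected T" "continuous_on T f" "x \<in> T" "y \<in> T" "\<forall>w\<in>T. f w \<noteq> 0"
  shows "f x * f y > 0"
proof (rule ccontr)
  assume "\<not> f x * f y > 0"
  moreover have "f x \<noteq> 0" "f y \<noteq> 0" using assms by auto
  ultimately have "(f x < 0 \<and> 0 < f y) \<or> (f y < 0 \<and> 0 < f x)"
    by (auto simp: zero_less_mult_iff)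
  moreover have c: "connected (f ` T)" using assms by (intro connected_continuous_image)
  ultimately have "0 \<in> f ` T"
    unfolding connected_iff_interval using assms(3,4) by (meson imageI less_imp_le)
  then show False using assms(5) by auto
qed

lemma F_S1_zero_iff: "a \<in> S1 \<Longrightarrow> b \<in> S1 \<Longrightarrow> z \<in> S1 \<Longrightarrow> a \<noteq> b \<Longrightarrow> F a b z = 0 \<longleftrightarrow> z = a \<or> z = b"
  using F_S1_zero by blast

lemma cc2:
  assumes "a \<in> S1" "b \<in> S1" "a \<noteq> b" "connected_component (S1 - {a,b}) z z'"
  shows "F a b z * F a b z' > 0"
proof (rule conn_sign[of "connected_component_set (S1 - {a,b}) z"])
  show "continuous_on (connected_component_set (S1 - {a, b}) z) (F a b)" by (rule continuous_F)
  have "z \<in> S1 - {a,b}" using connected_component_in[OF assms(4)] by blast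
  then show "z \<in> connected_component_set (S1 - {a, b}) z" by simp
  show "z' \<in> connected_component_set (S1 - {a, b}) z" using assms(4) by simp
  show "\<forall>w\<in>connected_component_set (S1 - {a, b}) z. F a b w \<noteq> 0"
    using connected_component_in F_S1_zero_iff assms(1-3) by fastforce
qed simp

lemma cis_in_S1 [simp]: "cis r \<in> S1" by simp

lemma cc1_aux:
  assumes "a \<in> S1" "b \<in> S1" "Arg a < Arg b" "z \<in> S1 - {a,b}" "z' \<in> S1 - {a,b}"
    "F a b z * F a b z' > 0"
  shows "connected_component (S1 - {a,b}) z z'"
proof -
  define s where "s = Arg a"
  define t where "t = Arg b"
  have st: "s < t" "-pi < s" "t \<le> pi" using assms(3) mpi_less_Arg Arg_le_pi unfolding s_def t_def
    by auto
  have zS: "z \<in> S1" "z' \<in> S1" using assms by auto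
  have ab: "a = cis s" "b = cis t" using assms S1_cis unfolding s_def t_def by auto
  have Fz: "F a b z \<noteq> 0" "F a b z' \<noteq> 0" using assms(6) by auto
  consider "F a b z < 0" "F a b z' < 0" | "F a b z > 0" "F a b z' > 0"
    using assms(6) by (auto simp: zero_less_mult_iff)
  then show ?thesis
  proof cases
    case 1
    let ?U = "cis ` {s<..<t}"
    have U: "connected ?U" by (intro connected_continuous_image continuous_intros) auto
    have "?U \<subseteq> S1 - {a,b}"
    proof
      fix w assume "w \<in> ?U"
      then obtain r where r: "s < r" "r < t" "w = cis r" by auto
      then have "Arg w = r" using st by (auto intro!: Arg_cis)
      then show "w \<in> S1 - {a,b}" using r ab st Arg_cis[of s] Arg_cis[of t] by auto
    qed
    moreover have "z \<in> ?U" if "z \<in> S1" "F a b z < 0" for z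
    proof -
      have "s < Arg z" "Arg z < t"
        using that F_S1_neg[OF assms(1,2) that(1)] st unfolding s_def t_def by auto
      then show ?thesis using S1_cis[OF that(1)] by (auto intro!: image_eqI[where x="Arg z"])
    qed
    ultimately show ?thesis using U 1 zS by (intro connected_componentI) auto
  next
    case 2
    let ?U = "cis ` {t<..<s+2*pi}"
    have U: "connected ?U" by (intro connected_continuous_image continuous_intros) auto
    have "?U \<subseteq> S1 - {a,b}"
    proof
      fix w assume "w \<in> ?U"
      then obtain r where r: "t < r" "r < s + 2*pi" "w = cis r" by auto
      have "Arg w \<noteq> s \<and> Arg w \<noteq> t"
      proof (cases "r \<le> pi")
        case True
        then have "Arg w = r" using st r by (auto intro!: Arg_cis)
        then show ?thesis using r st by auto
      next
        case False
        have "cis (r - 2*pi) = cis r * cis (- (2*pi))" by (simp only: cis_mult) simp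
        also have "cis (- (2*pi)) = 1" by (simp add: complex_eq_iff)
        finally have "w = cis (r - 2*pi)" using r by simp
        moreover have "r - 2*pi \<in> {-pi<..pi}" using False r st by auto
        ultimately have "Arg w = r - 2*pi" by (simp add: Arg_cis)
        then show ?thesis using r st False by auto
      qed
      then show "w \<in> S1 - {a,b}" using r unfolding s_def t_def by auto
    qed
    moreover have "z \<in> ?U" if "z \<in> S1" "F a b z > 0" for z
    proof -
      have A: "Arg z < s \<or> t < Arg z"
        using that F_S1_pos[OF assms(1,2) that(1)] st unfolding s_def t_def by auto
      show ?thesis
      proof (cases "t < Arg z")
        case True
        then show ?thesis using Arg_le_pi[of z] st S1_cis[OF that(1)]
          by (auto intro!: image_eqI[where x="Arg z"])
      next
        case False
        then have "Arg z < s" using A by auto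
        moreover have "cis (Arg z + 2*pi) = z"
        proof -
          have "cis (Arg z + 2*pi) = cis (Arg z) * cis (2*pi)" by (simp only: cis_mult)
          also have "cis (2*pi) = 1" by (simp add: complex_eq_iff)
          finally show ?thesis using S1_cis[OF that(1)] by simp
        qed
        ultimately show ?thesis using mpi_less_Arg[of z] st
          by (auto intro!: image_eqI[where x="Arg z + 2*pi"])
      qed
    qed
    ultimately show ?thesis using U 2 zS by (intro connected_componentI) auto
  qed
qed

lemma cc1:
  assumes "a \<in> S1" "b \<in> S1" "a \<noteq> b" "z \<in> S1 - {a,b}" "z' \<in> S1 - {a,b}"
    "F a b z * F a b z' > 0"
  shows "connected_component (S1 - {a,b}) z z'"
proof (cases "Arg a < Arg b")
  case True
  then show ?thesis using cc1_aux assms by blast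
next
  case False
  then have "Arg b < Arg a" using assms S1_neq by force
  moreover have "F b a z * F b a z' > 0" using assms(6) F_swap[of a b] by simp
  ultimately have "connected_component (S1 - {b,a}) z z'" using cc1_aux assms by blast
  then show ?thesis by (simp add: insert_commute)
qed

lemma is_leaf_pair: "a \<in> S1 \<Longrightarrow> b \<in> S1 \<Longrightarrow> a \<noteq> b \<Longrightarrow> is_leaf {a,b}"
  unfolding is_leaf_def by blast

lemma crosses_iff:
  assumes "p \<in> S1" "q \<in> S1" "a \<in> S1" "b \<in> S1" "p \<noteq> q" "a \<noteq> b"
  shows "crosses {p,q} {a,b} \<longleftrightarrow> F a b p * F a b q < 0"
proof
  assume "crosses {p,q} {a,b}"
  then obtain a1 a2 where A: "{p,q} = {a1,a2}" "a1 \<in> S1 - {a,b}" "a2 \<in> S1 - {a,b}"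
    "\<not> connected_component (S1 - {a,b}) a1 a2"
    unfolding crosses_def by blast
  have "\<not> F a b a1 * F a b a2 > 0" using cc1 A assms by blast
  moreover have "F a b a1 \<noteq> 0" "F a b a2 \<noteq> 0" using A F_S1_zero_iff assms by auto
  ultimately have "F a b a1 * F a b a2 < 0"
    by (metis linorder_neqE_linordered_idom mult_eq_0_iff)
  moreover have "(a1 = p \<and> a2 = q) \<or> (a1 = q \<and> a2 = p)" using A(1) assms(5) by (auto simp: doubleton_eq_iff)
  ultimately show "F a b p * F a b q < 0" by (auto simp: mult.commute)
next
  assume neg: "F a b p * F a b q < 0"
  then have "F a b p \<noteq> 0" "F a b q \<noteq> 0" by auto
  then have "p \<in> S1 - {a,b}" "q \<in> S1 - {a,b}" using assms by auto
  moreover have "\<not> connected_component (S1 - {a,b}) p q" using cc2 assms neg by fastforce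
  ultimately show "crosses {p,q} {a,b}"
    unfolding crosses_def using is_leaf_pair assms by blast
qed

lemma seg_aux:
  fixes a1 a2 b1 b2 z1 z2 :: real
  assumes a: "a1^2 + a2^2 = 1" and b: "b1^2 + b2^2 = 1" and D: "(b1-a1)^2 + (b2-a2)^2 > 0"
    and z: "z1^2 + z2^2 \<le> 1" and F: "(z2-a2)*(b1-a1) - (z1-a1)*(b2-a2) = 0"
  shows "\<exists>t. 0 \<le> t \<and> t \<le> 1 \<and> z1 = a1 + t*(b1-a1) \<and> z2 = a2 + t*(b2-a2)"
proof -
  define D where "D = (b1-a1)^2 + (b2-a2)^2"
  define t where "t = ((z1-a1)*(b1-a1) + (z2-a2)*(b2-a2)) / D"
  have Dp: "D > 0" using assms D_def by simp
  have F': "(z1-a1)*(b2-a2) = (z2-a2)*(b1-a1)" using F by linarith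
  have e1: "z1 = a1 + t*(b1-a1)"
  proof -
    have "(z1 - a1) * D - ((z1-a1)*(b1-a1) + (z2-a2)*(b2-a2)) * (b1-a1)
        = (b2-a2) * ((z1-a1)*(b2-a2) - (z2-a2)*(b1-a1))"
      unfolding D_def by (simp add: power2_eq_square algebra_simps)
    also have "\<dots> = 0" using F' by simp
    finally have "(z1 - a1) * D = ((z1-a1)*(b1-a1) + (z2-a2)*(b2-a2)) * (b1-a1)" by simp
    then show ?thesis unfolding t_def using Dp by (simp add: field_simps)
  qed
  have e2: "z2 = a2 + t*(b2-a2)"
  proof -
    have "(z2 - a2) * D - ((z1-a1)*(b1-a1) + (z2-a2)*(b2-a2)) * (b2-a2)
        = (b1-a1) * ((z2-a2)*(b1-a1) - (z1-a1)*(b2-a2))"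
      unfolding D_def by (simp add: power2_eq_square algebra_simps)
    also have "\<dots> = 0" using F' by simp
    finally have "(z2 - a2) * D = ((z1-a1)*(b1-a1) + (z2-a2)*(b2-a2)) * (b2-a2)" by simp
    then show ?thesis unfolding t_def using Dp by (simp add: field_simps)
  qed
  have h: "2*(a1*(b1-a1) + a2*(b2-a2)) = -D"
  proof -
    have "2*(a1*(b1-a1) + a2*(b2-a2)) + D = (a1^2 + a2^2) + (b1^2 + b2^2) - 2 * (a1^2 + a2^2)"
      unfolding D_def by (simp add: power2_eq_square algebra_simps)
    then show ?thesis using a b by simp
  qed
  have "z1^2 + z2^2 = (a1^2 + a2^2) + t * (2*(a1*(b1-a1) + a2*(b2-a2))) + t^2 * D"
    unfolding e1 e2 D_def by (simp add: power2_eq_square algebra_simps)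
  also have "\<dots> = 1 + (t^2 - t) * D" by (simp only: a h) (simp add: algebra_simps)
  finally have "(t^2 - t) * D \<le> 0" using z by linarith
  then have "t^2 - t \<le> 0" using Dp by (simp add: mult_le_0_iff)
  then have "t * (t - 1) \<le> 0" by (simp add: power2_eq_square algebra_simps)
  then have "0 \<le> t \<and> t \<le> 1" by (auto simp: mult_le_0_iff)
  then show ?thesis using e1 e2 by blast
qed

lemma norm1_comp: "norm (z::complex) = 1 \<Longrightarrow> (Re z)^2 + (Im z)^2 = 1"
  using cmod_power2[of z] by simp

lemma normle_comp: "norm (z::complex) \<le> 1 \<Longrightarrow> (Re z)^2 + (Im z)^2 \<le> 1"
  using cmod_power2[of z] by (metis abs_norm_cancel norm_ge_zero power_le_one)

lemma F_comp: "F a b z = (Im z - Im a)*(Re b - Re a) - (Re z - Re a)*(Im b - Im a)"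
  unfolding F_def by (simp add: algebra_simps)

lemma chord_line:
  assumes "a \<in> S1" "b \<in> S1" "a \<noteq> b" "z \<in> D2" "F a b z = 0"
  shows "z \<in> closed_segment a b"
proof -
  have D: "(Re b - Re a)^2 + (Im b - Im a)^2 > 0"
    using assms(3) by (metis complex_eq_iff eq_iff_diff_eq_0 power2_eq_square sum_power2_gt_zero_iff)
  obtain t where t: "0 \<le> t" "t \<le> 1" "Re z = Re a + t*(Re b - Re a)" "Im z = Im a + t*(Im b - Im a)"
    using seg_aux[OF norm1_comp norm1_comp D normle_comp] assms F_comp[of a b z] by auto
  have "z = (1 - t) *\<^sub>R a + t *\<^sub>R b" using t by (simp add: complex_eq_iff algebra_simps)
  then show ?thesis using t unfolding closed_segment_def by blast
qed

lemma segment_F: "z \<in> closed_segment a b \<Longrightarrow> F a b z = 0"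
  unfolding closed_segment_def using F_comb by auto

lemma leaf_S1: "is_leaf {a,b} \<Longrightarrow> a \<in> S1 \<and> b \<in> S1 \<and> a \<noteq> b"
  unfolding is_leaf_def by (auto simp: doubleton_eq_iff)

lemma leaf_ex: "is_leaf l \<Longrightarrow> \<exists>a b. l = {a,b} \<and> a \<in> S1 \<and> b \<in> S1 \<and> a \<noteq> b"
  unfolding is_leaf_def by auto

lemma Geo_iff: "z \<in> Geo L \<longleftrightarrow> (\<exists>a b. {a,b} \<in> L \<and> z \<in> closed_segment a b)"
  unfolding Geo_def by auto

definition Cp :: "complex set set \<Rightarrow> complex \<Rightarrow> complex set" where
  "Cp L x0 = {z \<in> D2. \<forall>a b. {a,b} \<in> L \<longrightarrow> F a b z * F a b x0 \<ge> 0}"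

lemma prelam_leaf: "prelamination L \<Longrightarrow> {a,b} \<in> L \<Longrightarrow> a \<in> S1 \<and> b \<in> S1 \<and> a \<noteq> b"
  unfolding prelamination_def using leaf_S1 by blast

lemma pos_comb: "0 \<le> u \<Longrightarrow> u \<le> 1 \<Longrightarrow> A > 0 \<Longrightarrow> B > 0 \<Longrightarrow> (1-u)*A + u*B > (0::real)"
proof -
  assume a: "0 \<le> u" "u \<le> 1" "A > 0" "B > 0"
  show ?thesis
  proof (cases "u = 0")
    case False
    then have "u * B > 0" using a by simp
    moreover have "(1-u)*A \<ge> 0" using a by simp
    ultimately show ?thesis by linarith
  qed (use a in simp)
qed

lemma pos_comb2: "0 \<le> u \<Longrightarrow> u < 1 \<Longrightarrow> A > 0 \<Longrightarrow> B \<ge> 0 \<Longrightarrow> (1-u)*A + u*B > (0::real)"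
proof -
  assume a: "0 \<le> u" "u < 1" "A > 0" "B \<ge> 0"
  then have "(1-u)*A > 0" "u*B \<ge> 0" by auto
  then show ?thesis by linarith
qed

lemma R0:
  assumes "prelamination L" "x0 \<in> D2 - Geo L" "{a,b} \<in> L"
  shows "F a b x0 \<noteq> 0"
proof
  assume "F a b x0 = 0"
  then have "x0 \<in> closed_segment a b" using chord_line prelam_leaf assms by blast
  then show False using assms Geo_iff by blast
qed

lemma R1:
  assumes "prelamination L" "x0 \<in> D2 - Geo L" "z \<in> connected_component_set (D2 - Geo L) x0" "{a,b} \<in> L"
  shows "F a b z * F a b x0 > 0"
proof -
  let ?K = "connected_component_set (D2 - Geo L) x0"
  have "F a b x0 * F a b z > 0"
  proof (rule conn_sign[of ?K])
    show "continuous_on ?K (F a b)" by (rule continuous_F)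
    show "x0 \<in> ?K" using assms(2) by simp
    show "z \<in> ?K" by fact
    show "\<forall>w\<in>?K. F a b w \<noteq> 0"
    proof
      fix w assume "w \<in> ?K"
      then have w: "w \<in> D2 - Geo L" using connected_component_subset by blast
      show "F a b w \<noteq> 0"
      proof
        assume "F a b w = 0"
        then have "w \<in> closed_segment a b" using chord_line prelam_leaf assms w by blast
        then show False using assms w Geo_iff by blast
      qed
    qed
  qed simp
  then show ?thesis by (simp add: mult.commute)
qed

lemma R3:
  assumes "prelamination L" "x0 \<in> D2 - Geo L" "z \<in> D2"
    "\<forall>a b. {a,b} \<in> L \<longrightarrow> F a b z * F a b x0 > 0"
  shows "z \<in> connected_component_set (D2 - Geo L) x0"
proof -
  have "closed_segment x0 z \<subseteq> D2 - Geo L"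
  proof
    fix y assume y: "y \<in> closed_segment x0 z"
    then obtain u where u: "0 \<le> u" "u \<le> 1" "y = (1-u) *\<^sub>R x0 + u *\<^sub>R z"
      unfolding closed_segment_def by blast
    have "y \<in> D2" using y assms(2,3) convex_cball[of 0 1] closed_segment_subset by blast
    moreover have "y \<notin> Geo L"
    proof
      assume "y \<in> Geo L"
      then obtain a b where ab: "{a,b} \<in> L" "y \<in> closed_segment a b" using Geo_iff by blast
      then have "F a b y = 0" using segment_F by blast
      moreover have "F a b y * F a b x0 = (1-u) * (F a b x0)^2 + u * (F a b z * F a b x0)"
        unfolding u(3) F_comb by (simp add: algebra_simps power2_eq_square)
      moreover have "F a b x0 \<noteq> 0" using R0 assms ab by blast
      moreover have "F a b z * F a b x0 > 0" using assms ab by blast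
      ultimately show False using pos_comb[OF u(1,2), of "(F a b x0)^2" "F a b z * F a b x0"] by simp
    qed
    ultimately show "y \<in> D2 - Geo L" by blast
  qed
  then show ?thesis using connected_componentI[OF connected_segment[of x0 z]] by auto
qed

lemma closed_Cp: "closed (Cp L x0)"
proof -
  have "Cp L x0 = D2 \<inter> (\<Inter>ab\<in>{(a,b). {a,b} \<in> L}. {z. 0 \<le> F (fst ab) (snd ab) z * F (fst ab) (snd ab) x0})"
    unfolding Cp_def by auto
  moreover have "closed {z. 0 \<le> F a b z * F a b x0}" for a b
    by (rule closed_Collect_le) (auto intro: continuous_on_mult_right continuous_F)
  ultimately show ?thesis by (simp add: closed_INT closed_Int)
qed

lemma Cp_comb:
  assumes "p \<in> Cp L x0" "q \<in> Cp L x0" "0 \<le> u" "u \<le> 1"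
  shows "(1-u) *\<^sub>R p + u *\<^sub>R q \<in> Cp L x0"
proof -
  have "(1-u) *\<^sub>R p + u *\<^sub>R q \<in> D2"
  proof -
    have "p \<in> D2" "q \<in> D2" using assms unfolding Cp_def by auto
    then show ?thesis using assms convex_cball[of 0 1] unfolding convex_alt by blast
  qed
  moreover have "F a b ((1-u) *\<^sub>R p + u *\<^sub>R q) * F a b x0 \<ge> 0" if "{a,b} \<in> L" for a b
  proof -
    have "F a b ((1-u) *\<^sub>R p + u *\<^sub>R q) * F a b x0 = (1-u) * (F a b p * F a b x0) + u * (F a b q * F a b x0)"
      unfolding F_comb by (simp add: algebra_simps)
    moreover have "F a b p * F a b x0 \<ge> 0" "F a b q * F a b x0 \<ge> 0" using assms that unfolding Cp_def by auto
    ultimately show ?thesis using assms by simp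
  qed
  ultimately show ?thesis unfolding Cp_def by blast
qed

lemma convex_Cp: "convex (Cp L x0)"
  unfolding convex_alt using Cp_comb by blast

lemma closure_K:
  assumes "prelamination L" "x0 \<in> D2 - Geo L"
  shows "closure (connected_component_set (D2 - Geo L) x0) = Cp L x0"
proof
  let ?K = "connected_component_set (D2 - Geo L) x0"
  have "?K \<subseteq> Cp L x0"
  proof
    fix z assume z: "z \<in> ?K"
    then have "z \<in> D2" using connected_component_subset by blast
    moreover have "F a b z * F a b x0 \<ge> 0" if "{a,b} \<in> L" for a b
      using R1[OF assms z that] by simp
    ultimately show "z \<in> Cp L x0" unfolding Cp_def by blast
  qed
  then show "closure ?K \<subseteq> Cp L x0" using closed_Cp closure_minimal by blast
  show "Cp L x0 \<subseteq> closure ?K"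
  proof
    fix p assume p: "p \<in> Cp L x0"
    show "p \<in> closure ?K"
    proof (cases "p = x0")
      case True
      then show ?thesis using assms closure_subset by fastforce
    next
      case False
      have "open_segment x0 p \<subseteq> ?K"
      proof
        fix y assume y: "y \<in> open_segment x0 p"
        then obtain u where u: "0 < u" "u < 1" "y = (1-u) *\<^sub>R x0 + u *\<^sub>R p"
          unfolding open_segment_image_interval using False by (auto simp: in_segment)
        have x0C: "x0 \<in> Cp L x0" unfolding Cp_def using assms by (auto simp: zero_le_mult_iff)
        have "y \<in> D2" using Cp_comb[OF x0C p] u unfolding Cp_def by auto
        moreover have "F a b y * F a b x0 > 0" if "{a,b} \<in> L" for a b
        proof -
          have "F a b y * F a b x0 = (1-u) * (F a b x0)^2 + u * (F a b p * F a b x0)"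
            unfolding u(3) F_comb by (simp add: algebra_simps power2_eq_square)
          moreover have "F a b x0 \<noteq> 0" using R0 assms that by blast
          moreover have "F a b p * F a b x0 \<ge> 0" using p that unfolding Cp_def by blast
          ultimately show ?thesis using pos_comb2[of u "(F a b x0)^2" "F a b p * F a b x0"] u by simp
        qed
        ultimately show "y \<in> ?K" using R3 assms by blast
      qed
      then have "closure (open_segment x0 p) \<subseteq> closure ?K" by (rule closure_mono)
      then show ?thesis using False by auto
    qed
  qed
qed

lemma F_affine: "\<alpha> + \<beta> = 1 \<Longrightarrow> F a b (\<alpha> *\<^sub>R p + \<beta> *\<^sub>R q) = \<alpha> * F a b p + \<beta> * F a b q"
proof -
  assume "\<alpha> + \<beta> = 1"
  then have "\<alpha> = 1 - \<beta>" by simp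
  then show ?thesis using F_comb[of a b \<beta> p q] by simp
qed

lemma F_diff: "F a b q - F a b m = Im ((q - m) * cnj (b - a))"
  unfolding F_def by (simp add: algebra_simps)

lemma F_lip: "\<bar>F a b q - F a b m\<bar> \<le> norm (q - m) * norm (b - a)"
proof -
  have "\<bar>F a b q - F a b m\<bar> \<le> norm ((q - m) * cnj (b - a))" unfolding F_diff by (rule abs_Im_le_cmod)
  also have "\<dots> = norm (q - m) * norm (cnj (b - a))" by (rule norm_mult)
  also have "norm (cnj (b - a)) = norm (b - a)" by (rule complex_mod_cnj)
  finally show ?thesis .
qed

lemma F_mid: "F a b ((a+b)/2) = 0"
proof -
  have 1: "(a+b)/2 - a = (b-a)/2" by (simp add: field_simps)
  have "(b-a) * cnj (b-a) = of_real ((norm (b-a))^2)" by (rule complex_norm_square[symmetric])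
  then have "(b-a)/2 * cnj (b-a) = of_real ((norm (b-a))^2 / 2)" by (simp add: field_simps)
  then show ?thesis unfolding F_def 1 by simp
qed

lemma side_half:
  assumes cv: "convex C" and ab: "a \<in> S1" "b \<in> S1" "a \<noteq> b" and seg: "closed_segment a b \<subseteq> C"
    and p: "p \<in> C" "F a b p \<noteq> 0" and m: "m = (a+b)/2" and q: "norm (q - m) < e"
    and Fq: "F a b q * F a b p \<ge> 0"
    and e1: "e * norm (b - a) \<le> \<bar>F a b p\<bar> / 2"
    and e2: "2 * e * (1 + norm (b - a) * norm (p - m) / \<bar>F a b p\<bar>) \<le> 1 - norm m"
  shows "q \<in> C"
proof -
  define U where "U = norm (b - a)"
  define l where "l = F a b q / F a b p"
  define P where "P = \<bar>F a b p\<bar>"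
  have P0: "P > 0" unfolding P_def using p(2) by simp
  have Fm: "F a b m = 0" unfolding m by (rule F_mid)
  have U0: "U \<ge> 0" unfolding U_def by simp
  have "l = (F a b q * F a b p) / (F a b p)^2" unfolding l_def using p(2) by (simp add: power2_eq_square)
  then have l0: "l \<ge> 0" using Fq by simp
  have Fqb: "\<bar>F a b q\<bar> \<le> norm (q - m) * U" using F_lip[of a b q m] Fm unfolding U_def by simp
  have "l \<le> \<bar>l\<bar>" by simp
  also have "\<bar>l\<bar> = \<bar>F a b q\<bar> / P" unfolding l_def P_def by (simp add: abs_divide)
  also have "\<dots> \<le> norm (q - m) * U / P" using Fqb P0 by (simp add: divide_right_mono)
  also have "\<dots> \<le> e * U / P" using q U0 P0 by (simp add: divide_right_mono mult_right_mono)
  finally have lb2: "l \<le> e * U / P" .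
  have "e * U / P \<le> 1/2" using e1 P0 unfolding U_def P_def by (simp add: divide_le_eq)
  then have l1: "l \<le> 1/2" using lb2 by linarith
  have l1': "1 - l > 0" using l1 by simp
  define y where "y = (1/(1-l)) *\<^sub>R q + (-l/(1-l)) *\<^sub>R p"
  have Fy: "F a b y = 0"
  proof -
    have s: "1/(1-l) + (-l/(1-l)) = 1" using l1' by (simp add: field_simps)
    have "F a b y = (1/(1-l)) * F a b q + (-l/(1-l)) * F a b p"
      unfolding y_def by (rule F_affine[OF s])
    also have "\<dots> = (F a b q - l * F a b p) / (1 - l)" by (simp add: diff_divide_distrib)
    also have "l * F a b p = F a b q" unfolding l_def using p(2) by simp
    finally show ?thesis by simp
  qed
  have qy: "q = (1 - l) *\<^sub>R y + l *\<^sub>R p"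
  proof -
    have "(1 - l) *\<^sub>R y = ((1-l) * (1/(1-l))) *\<^sub>R q + ((1-l)*(-l/(1-l))) *\<^sub>R p"
      unfolding y_def by (simp only: scaleR_add_right scaleR_scaleR)
    also have "(1-l) * (1/(1-l)) = 1" using l1' by simp
    also have "(1-l)*(-l/(1-l)) = -l" using l1' by simp
    finally show ?thesis by simp
  qed
  have ym: "(1 - l) *\<^sub>R (y - m) = (q - m) - l *\<^sub>R (p - m)"
  proof -
    have "(1 - l) *\<^sub>R (y - m) = (1 - l) *\<^sub>R y - (1 - l) *\<^sub>R m" by (simp add: scaleR_diff_right)
    also have "(1 - l) *\<^sub>R y = q - l *\<^sub>R p" using qy by simp
    finally show ?thesis by (simp add: algebra_simps)
  qed
  have "(1 - l) * norm (y - m) = norm ((q - m) - l *\<^sub>R (p - m))"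
    using ym l1' by (metis abs_of_pos norm_scaleR)
  also have "\<dots> \<le> norm (q - m) + l * norm (p - m)"
    using norm_triangle_ineq4[of "q - m" "l *\<^sub>R (p - m)"] l0 by simp
  also have "\<dots> \<le> e + e * U / P * norm (p - m)"
    using q lb2 by (intro add_mono mult_right_mono) auto
  finally have n1: "(1 - l) * norm (y - m) \<le> e + e * U / P * norm (p - m)" .
  have "1 * norm (y - m) \<le> (2 * (1 - l)) * norm (y - m)" using l1 by (intro mult_right_mono) auto
  then have "norm (y - m) \<le> 2 * ((1 - l) * norm (y - m))" by (simp add: algebra_simps)
  also have "\<dots> \<le> 2 * (e + e * U / P * norm (p - m))" using n1 by simp
  also have "\<dots> = 2 * e * (1 + U * norm (p - m) / P)" by (simp add: algebra_simps)
  also have "\<dots> \<le> 1 - norm m" using e2 unfolding U_def P_def by simp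
  finally have "norm y \<le> 1" using norm_triangle_ineq2[of y m] by simp
  then have "y \<in> closed_segment a b" using chord_line ab Fy by simp
  then have yC: "y \<in> C" using seg by blast
  show ?thesis using cv yC p(1) l0 l1 qy unfolding convex_alt by simp
qed

lemma mid_norm: "a \<in> S1 \<Longrightarrow> b \<in> S1 \<Longrightarrow> a \<noteq> b \<Longrightarrow> norm ((a+b)/2) < 1"
proof -
  assume a: "a \<in> S1" "b \<in> S1" "a \<noteq> b"
  have "norm (a+b) \<noteq> norm a + norm b"
  proof
    assume "norm (a+b) = norm a + norm b"
    then have "norm a *\<^sub>R b = norm b *\<^sub>R a" using norm_triangle_eq by blast
    then show False using a by simp
  qed
  then have "norm (a + b) < 2" using norm_triangle_ineq[of a b] a by simp
  then show ?thesis by (simp add: norm_divide)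
qed

lemma e_pos: "M < 1 \<Longrightarrow> X \<ge> 0 \<Longrightarrow> (1 - M) / (2 * (1 + X)) > (0::real)"
  by (simp add: divide_pos_pos add_pos_nonneg)

lemma e_eq: "X \<ge> 0 \<Longrightarrow> 2 * ((1 - M) / (2 * (1 + X))) * (1 + X) = (1 - M::real)"
proof -
  assume "X \<ge> 0"
  then have "1 + X \<noteq> 0" by simp
  then show ?thesis by (simp add: field_simps)
qed

lemma mid_seg: "(a+b)/2 \<in> closed_segment a (b::complex)"
proof -
  have "(a+b)/2 = midpoint a b" by (simp add: midpoint_def scaleR_conv_of_real field_simps)
  then show ?thesis using midpoint_in_closed_segment by simp
qed

lemma mid_interior:
  assumes cv: "convex C" and ab: "a \<in> S1" "b \<in> S1" "a \<noteq> b" and seg: "closed_segment a b \<subseteq> C"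
    and c: "c \<in> C" "F a b c > 0" and z: "z \<in> C" "F a b z < 0"
  shows "(a+b)/2 \<in> interior C"
proof -
  define m where "m = (a+b)/2"
  define U where "U = norm (b - a)"
  define M where "M = norm m"
  have U0: "U > 0" unfolding U_def using ab by simp
  have M1: "M < 1" unfolding M_def m_def using mid_norm ab by blast
  define e1 where "e1 = \<bar>F a b c\<bar> / (2*U)"
  define e2 where "e2 = \<bar>F a b z\<bar> / (2*U)"
  define e3 where "e3 = (1 - M) / (2 * (1 + U * norm (c - m) / \<bar>F a b c\<bar>))"
  define e4 where "e4 = (1 - M) / (2 * (1 + U * norm (z - m) / \<bar>F a b z\<bar>))"
  define e where "e = min (min e1 e2) (min e3 e4)"
  have X: "U * norm (c - m) / \<bar>F a b c\<bar> \<ge> 0" "U * norm (z - m) / \<bar>F a b z\<bar> \<ge> 0"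
    using U0 by auto
  have "\<bar>F a b c\<bar> > 0" "\<bar>F a b z\<bar> > 0" using c z by auto
  then have pos: "e1 > 0" "e2 > 0"
    unfolding e1_def e2_def using U0 by (metis divide_pos_pos zero_less_mult_iff zero_less_numeral)+
  have pos3: "e3 > 0" unfolding e3_def using e_pos[OF M1 X(1)] .
  have pos4: "e4 > 0" unfolding e4_def using e_pos[OF M1 X(2)] .
  have e0: "e > 0" unfolding e_def using pos pos3 pos4 by simp
  have "ball m e \<subseteq> C"
  proof
    fix q assume "q \<in> ball m e"
    then have q: "norm (q - m) < e" by (simp add: dist_norm norm_minus_commute)
    show "q \<in> C"
    proof (cases "F a b q * F a b c \<ge> 0")
      case True
      show ?thesis
      proof (rule side_half[OF cv ab seg c(1) _ m_def q True])
        show "F a b c \<noteq> 0" using c by simp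
        have "e \<le> e1" unfolding e_def by simp
        then have "e * U \<le> e1 * U" using U0 by (simp add: mult_right_mono)
        also have "e1 * U = \<bar>F a b c\<bar> / 2" unfolding e1_def using U0 by simp
        finally show "e * norm (b - a) \<le> \<bar>F a b c\<bar> / 2" unfolding U_def .
        have "e \<le> e3" unfolding e_def by simp
        moreover have "(1 + U * norm (c - m) / \<bar>F a b c\<bar>) > 0" using X(1) by linarith
        ultimately have "2 * e * (1 + U * norm (c - m) / \<bar>F a b c\<bar>) \<le> 2 * e3 * (1 + U * norm (c - m) / \<bar>F a b c\<bar>)"
          by (simp add: mult_right_mono)
        also have "\<dots> = 1 - M" unfolding e3_def by (rule e_eq[OF X(1)])
        finally show "2 * e * (1 + norm (b - a) * norm (c - m) / \<bar>F a b c\<bar>) \<le> 1 - norm m"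
          unfolding U_def M_def .
      qed
    next
      case False
      then have "F a b q < 0" using c by (simp add: zero_le_mult_iff) 
      then have Fq: "F a b q * F a b z \<ge> 0" using z by (simp add: zero_le_mult_iff)
      show ?thesis
      proof (rule side_half[OF cv ab seg z(1) _ m_def q Fq])
        show "F a b z \<noteq> 0" using z by simp
        have "e \<le> e2" unfolding e_def by simp
        then have "e * U \<le> e2 * U" using U0 by (simp add: mult_right_mono)
        also have "e2 * U = \<bar>F a b z\<bar> / 2" unfolding e2_def using U0 by simp
        finally show "e * norm (b - a) \<le> \<bar>F a b z\<bar> / 2" unfolding U_def .
        have "e \<le> e4" unfolding e_def by simp
        moreover have "(1 + U * norm (z - m) / \<bar>F a b z\<bar>) > 0" using X(2) by linarith
        ultimately have "2 * e * (1 + U * norm (z - m) / \<bar>F a b z\<bar>) \<le> 2 * e4 * (1 + U * norm (z - m) / \<bar>F a b z\<bar>)"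
          by (simp add: mult_right_mono)
        also have "\<dots> = 1 - M" unfolding e4_def by (rule e_eq[OF X(2)])
        finally show "2 * e * (1 + norm (b - a) * norm (z - m) / \<bar>F a b z\<bar>) \<le> 1 - norm m"
          unfolding U_def M_def .
      qed
    qed
  qed
  then show ?thesis unfolding m_def using e0 mem_interior by blast
qed

definition oside :: "complex set \<Rightarrow> complex \<Rightarrow> complex \<Rightarrow> bool" where
  "oside C a b \<longleftrightarrow> a \<in> S1 \<and> b \<in> S1 \<and> a \<noteq> b \<and> closed_segment a b \<subseteq> C \<and>
     (\<forall>c\<in>C. F a b c \<ge> 0) \<and> (\<exists>c\<in>C. F a b c > 0)"

lemma F_shift: "F a b (y + d) = F a b y + Im (d * cnj (b - a))"
  unfolding F_def by (simp add: algebra_simps)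

lemma halfplane_not_interior:
  assumes "a \<noteq> b" "\<forall>c\<in>C. F a b c \<ge> 0" "F a b y = 0"
  shows "y \<notin> interior C"
proof
  assume "y \<in> interior C"
  then obtain e where e: "e > 0" "ball y e \<subseteq> C" using mem_interior by blast
  define U where "U = norm (b - a)"
  have U0: "U > 0" unfolding U_def using assms by simp
  define k where "k = e / (2 * U)"
  have k0: "k > 0" unfolding k_def using e U0 by simp
  define d where "d = - (\<i> * of_real k) * (b - a)"
  have "norm d = k * U" unfolding d_def U_def using k0 by (simp add: norm_mult)
  also have "\<dots> = e / 2" unfolding k_def using U0 by simp
  finally have "y + d \<in> ball y e" using e by (simp add: dist_norm)
  then have "y + d \<in> C" using e by blast
  moreover have "F a b (y + d) = - k * U^2"
  proof -
    have "d * cnj (b - a) = - (\<i> * of_real k) * ((b - a) * cnj (b - a))" unfolding d_def by (simp add: algebra_simps)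
    also have "(b - a) * cnj (b - a) = of_real (U^2)" unfolding U_def by (rule complex_norm_square[symmetric])
    finally have "Im (d * cnj (b - a)) = - k * U^2" by simp
    then show ?thesis using F_shift[of a b y d] assms(3) by simp
  qed
  moreover have "- k * U^2 < 0" using k0 U0 by simp
  ultimately show False using assms(2) by fastforce
qed

lemma oside_geo:
  assumes "closed C" "oside C a b"
  shows "geodesic_side C {a,b}"
proof -
  have o: "a \<in> S1" "b \<in> S1" "a \<noteq> b" "closed_segment a b \<subseteq> C" "\<forall>c\<in>C. F a b c \<ge> 0"
    using assms(2) unfolding oside_def by auto
  have "closed_segment a b \<subseteq> frontier C"
  proof
    fix y assume y: "y \<in> closed_segment a b"
    then have "y \<in> closure C" using o(4) closure_subset by blast
    moreover have "y \<notin> interior C" using halfplane_not_interior[OF o(3) o(5)] segment_F y by blast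
    ultimately show "y \<in> frontier C" unfolding frontier_def by blast
  qed
  then show ?thesis unfolding geodesic_side_def using o by blast
qed

lemma side_oside:
  assumes cl: "closed C" and cv: "convex C" and sub: "C \<subseteq> D2"
    and nt: "\<not> (\<exists>a b. a \<noteq> b \<and> a \<in> S1 \<and> b \<in> S1 \<and> C = closed_segment a b)"
    and gs: "geodesic_side C s"
  shows "\<exists>a b. s = {a,b} \<and> oside C a b"
proof -
  obtain a b where ab: "a \<noteq> b" "a \<in> S1" "b \<in> S1" "s = {a,b}" "closed_segment a b \<subseteq> frontier C"
    using gs unfolding geodesic_side_def by blast
  have seg: "closed_segment a b \<subseteq> C" using ab(5) frontier_subset_closed[OF cl] by blast
  obtain c where c: "c \<in> C" "F a b c \<noteq> 0"
  proof (rule ccontr)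
    assume "\<not> thesis"
    then have "\<forall>c\<in>C. F a b c = 0" using that by blast
    then have "C \<subseteq> closed_segment a b" using chord_line ab sub by blast
    then have "C = closed_segment a b" using seg by blast
    then show False using nt ab by blast
  qed
  have one_side: "\<forall>z\<in>C. F a b z * F a b c \<ge> 0"
  proof (rule ccontr)
    assume "\<not> ?thesis"
    then obtain z where z: "z \<in> C" "F a b z * F a b c < 0" by (auto simp: not_le)
    have "(a+b)/2 \<in> interior C"
    proof (cases "F a b c > 0")
      case True
      then have "F a b z < 0" using z by (simp add: mult_less_0_iff)
      then show ?thesis using mid_interior[OF cv ab(2,3,1) seg c(1) True z(1)] by simp
    next
      case False
      then have c': "F a b c < 0" using c by simp
      then have "F a b z > 0" using z by (simp add: mult_less_0_iff)
      then show ?thesis using mid_interior[OF cv ab(2,3,1) seg z(1) _ c(1) c'] by simp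
    qed
    moreover have "(a+b)/2 \<in> closed_segment a b" by (rule mid_seg)
    then have "(a+b)/2 \<in> frontier C" using ab(5) by blast
    ultimately show False unfolding frontier_def by blast
  qed
  show ?thesis
  proof (cases "F a b c > 0")
    case True
    then have "\<forall>z\<in>C. F a b z \<ge> 0" using one_side by (auto simp: zero_le_mult_iff)
    then show ?thesis unfolding oside_def using ab seg c True by blast
  next
    case False
    then have c': "F a b c < 0" using c by simp
    have "F b a z \<ge> 0" if "z \<in> C" for z
      using one_side that c' F_swap[of a b z] by (auto simp: zero_le_mult_iff)
    moreover have "F b a c > 0" using c' F_swap[of a b c] by simp
    moreover have "closed_segment b a \<subseteq> C" using seg by (simp add: closed_segment_commute)
    moreover have "s = {b,a}" using ab by auto
    ultimately show ?thesis unfolding oside_def using ab c by blast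
  qed
qed

lemma sign_trans:
  fixes X Y Z :: real
  assumes "X * Z \<ge> 0" "Y * Z \<ge> 0" "Z \<noteq> 0"
  shows "X * Y \<ge> 0"
proof -
  have "(X * Z) * (Y * Z) \<ge> 0" using assms by simp
  then have "(X * Y) * Z^2 \<ge> 0" by (simp add: power2_eq_square algebra_simps)
  moreover have "Z^2 > 0" using assms by simp
  ultimately show ?thesis by (simp add: zero_le_mult_iff)
qed

lemma Cp_mem: "z \<in> Cp L x0 \<Longrightarrow> {a,b} \<in> L \<Longrightarrow> F a b z * F a b x0 \<ge> 0"
  unfolding Cp_def by blast

lemma oside_ends: "oside C a b \<Longrightarrow> a \<in> C \<and> b \<in> C"
  unfolding oside_def by auto

lemma leaf_not_cross_side:
  assumes L: "prelamination L" "x0 \<in> D2 - Geo L" and o: "oside (Cp L x0) a b" and w: "{w1,w2} \<in> L"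
  shows "F a b w1 * F a b w2 \<ge> 0"
proof -
  have wS: "w1 \<in> S1" "w2 \<in> S1" "w1 \<noteq> w2" using prelam_leaf[OF L(1) w] by auto
  have abS: "a \<in> S1" "b \<in> S1" "a \<noteq> b" using o unfolding oside_def by auto
  have "F w1 w2 a * F w1 w2 x0 \<ge> 0" "F w1 w2 b * F w1 w2 x0 \<ge> 0"
    using Cp_mem oside_ends[OF o] w by blast+
  moreover have "F w1 w2 x0 \<noteq> 0" using R0 L w by blast
  ultimately have "F w1 w2 a * F w1 w2 b \<ge> 0" by (rule sign_trans)
  then have "\<not> F w1 w2 a * F w1 w2 b < 0" by simp
  then have "\<not> F a b w1 * F a b w2 < 0" using cross_sym[OF abS(1,2) wS(1,2) abS(3) wS(3)] by simp
  then show ?thesis by simp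
qed

lemma exists_neg:
  assumes "a \<in> S1" "b \<in> S1" "a \<noteq> b"
  shows "\<exists>p\<in>S1. F a b p < 0"
proof -
  define s where "s = Arg a"
  define t where "t = Arg b"
  have st: "s \<noteq> t" "-pi < s" "s \<le> pi" "-pi < t" "t \<le> pi"
    using assms S1_neq mpi_less_Arg Arg_le_pi unfolding s_def t_def by auto
  obtain r where r: "-pi < r" "r \<le> pi" "(s < t \<and> s < r \<and> r < t) \<or> (t < s \<and> (r < t \<or> s < r))"
  proof (cases "s < t")
    case True
    then show ?thesis using that[of "(s+t)/2"] st by auto
  next
    case False
    then have ts: "t < s" using st by simp
    show ?thesis
    proof (cases "s < pi")
      case True
      then show ?thesis using that[of "(s+pi)/2"] st ts by auto
    next
      case False
      then show ?thesis using that[of "(t-pi)/2"] st ts by auto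
    qed
  qed
  have "Arg (cis r) = r" using r by (intro Arg_cis) auto
  then have "F a b (cis r) < 0" using F_S1_neg[OF assms(1,2) cis_in_S1] r unfolding s_def t_def by simp
  then show ?thesis using cis_in_S1 by blast
qed

lemma side_has_leaf:
  assumes L: "prelamination L" "x0 \<in> D2 - Geo L" and o: "oside (Cp L x0) a b"
  shows "\<exists>w1 w2. {w1,w2} \<in> L \<and> F a b w1 \<le> 0 \<and> F a b w2 \<le> 0"
proof (rule ccontr)
  assume nc: "\<not> ?thesis"
  have abS: "a \<in> S1" "b \<in> S1" "a \<noteq> b" using o unfolding oside_def by auto
  obtain p where p: "p \<in> S1" "F a b p < 0" using exists_neg[OF abS] by blast
  have "p \<in> Cp L x0"
    unfolding Cp_def
  proof (intro CollectI conjI allI impI)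
    show "p \<in> D2" using p by simp
    fix w1 w2 assume w: "{w1,w2} \<in> L"
    have wS: "w1 \<in> S1" "w2 \<in> S1" "w1 \<noteq> w2" using prelam_leaf[OF L(1) w] by auto
    have prod: "F a b w1 * F a b w2 \<ge> 0" by (rule leaf_not_cross_side[OF L o w])
    have "\<not> (F a b w1 \<le> 0 \<and> F a b w2 \<le> 0)" using nc w by blast
    then have ge: "F a b w1 \<ge> 0" "F a b w2 \<ge> 0" using prod
      by (auto simp: zero_le_mult_iff)
    have sa: "F w1 w2 p * F w1 w2 a \<ge> 0" "F w1 w2 p * F w1 w2 b \<ge> 0"
      using same_side_cap[OF abS(1,2) wS(1,2) p(1) abS(3) wS(3) ge p(2)] by auto
    have xa: "F w1 w2 a * F w1 w2 x0 \<ge> 0" "F w1 w2 b * F w1 w2 x0 \<ge> 0"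
      using Cp_mem oside_ends[OF o] w by blast+
    show "F w1 w2 p * F w1 w2 x0 \<ge> 0"
    proof (cases "F w1 w2 a = 0")
      case False
      show ?thesis by (rule sign_trans[OF sa(1) _ False]) (use xa(1) in \<open>simp add: mult.commute\<close>)
    next
      case Fa: True
      show ?thesis
      proof (cases "F w1 w2 b = 0")
        case False
        show ?thesis by (rule sign_trans[OF sa(2) _ False]) (use xa(2) in \<open>simp add: mult.commute\<close>)
      next
        case True
        have "a \<in> {w1,w2}" "b \<in> {w1,w2}" using Fa True F_S1_zero_iff wS abS by auto
        then have "F a b w1 = 0" "F a b w2 = 0" using abS wS by auto
        then have "F a b w1 \<le> 0 \<and> F a b w2 \<le> 0" by simp
        then show ?thesis using nc w by blast
      qed
    qed
  qed
  then show False using o p unfolding oside_def by auto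
qed

lemma sin_half_pos: "0 < x \<Longrightarrow> x < 2*pi \<Longrightarrow> sin (x/2) > 0"
  by (intro sin_gt_zero) auto
lemma sin_half_neg: "-2*pi < x \<Longrightarrow> x < 0 \<Longrightarrow> sin (x/2) < 0"
  using sin_half_pos[of "-x"] by simp
lemma sin_half_nonneg: "0 \<le> x \<Longrightarrow> x \<le> 2*pi \<Longrightarrow> sin (x/2) \<ge> 0"
  by (intro sin_ge_zero) auto
lemma sin_half_nonpos: "-2*pi \<le> x \<Longrightarrow> x \<le> 0 \<Longrightarrow> sin (x/2) \<le> 0"
  using sin_half_nonneg[of "-x"] by simp

lemma FP: "norm w = 1 \<Longrightarrow> F (w * cis s) (w * cis t) (w * cis r) = 4 * sin ((r-s)/2) * sin ((t-s)/2) * sin ((r-t)/2)"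
  by (simp add: F_rot F_trig)

lemma cover_sup:
  fixes u v :: "'w \<Rightarrow> real"
  assumes cov: "\<forall>t\<in>{t1..t2}. \<exists>w\<in>W. u w < t \<and> t < v w"
    and nest: "\<forall>w\<in>W. \<forall>w'\<in>W. (\<exists>t. u w < t \<and> t < v w \<and> u w' < t \<and> t < v w') \<longrightarrow>
        (u w \<le> u w' \<and> v w' \<le> v w) \<or> (u w' \<le> u w \<and> v w \<le> v w')"
    and t12: "t1 \<le> t2"
  shows "\<exists>w\<in>W. u w < t1 \<and> t2 < v w"
proof -
  define M where "M = {s \<in> {t1..t2}. \<exists>w\<in>W. u w < t1 \<and> s < v w}"
  have t1M: "t1 \<in> M" using cov t12 unfolding M_def by auto
  have bdd: "bdd_above M" unfolding M_def by (auto intro: bdd_aboveI[of _ t2])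
  have Mne: "M \<noteq> {}" using t1M by blast
  define s where "s = Sup M"
  have s1: "t1 \<le> s" unfolding s_def using t1M bdd by (rule cSup_upper)
  have s2: "s \<le> t2" unfolding s_def using t1M by (intro cSup_least) (auto simp: M_def)
  have "s \<in> {t1..t2}" using s1 s2 by simp
  then obtain w where w: "w \<in> W" "u w < s" "s < v w" using cov by blast
  have "\<exists>x\<in>M. u w < x" using less_cSup_iff[OF Mne bdd, of "u w"] w(2) unfolding s_def by simp
  then obtain x where x: "x \<in> M" "u w < x" by blast
  then obtain w' where w': "w' \<in> W" "u w' < t1" "x < v w'" unfolding M_def by blast
  have xs: "x \<le> s" unfolding s_def using x(1) bdd by (rule cSup_upper)
  have "t1 \<le> x" using x(1) unfolding M_def by auto
  then have uw'x: "u w' < x" using w' by simp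
  have "\<exists>t. u w < t \<and> t < v w \<and> u w' < t \<and> t < v w'"
    using x(2) xs w(3) uw'x w'(3) by (intro exI[of _ x]) auto
  then have "(u w \<le> u w' \<and> v w' \<le> v w) \<or> (u w' \<le> u w \<and> v w \<le> v w')"
    using nest w(1) w'(1) by blast
  then obtain w'' where w'': "w'' \<in> W" "u w'' < t1" "s < v w''"
  proof
    assume "u w \<le> u w' \<and> v w' \<le> v w"
    then show thesis using that[of w] w w' by auto
  next
    assume "u w' \<le> u w \<and> v w \<le> v w'"
    then show thesis using that[of w'] w w' by auto
  qed
  show ?thesis
  proof (cases "s < t2")
    case True
    define s' where "s' = min t2 ((s + v w'')/2)"
    have s'1: "s < s'" unfolding s'_def using True w'' by auto
    have "(s + v w'')/2 < v w''" using w'' by simp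
    moreover have "s' \<le> (s + v w'')/2" "s' \<le> t2" unfolding s'_def by (rule min.cobounded2, rule min.cobounded1)
    ultimately have s'2: "s' < v w''" "s' \<le> t2" by auto
    have "s' \<in> M" unfolding M_def using w'' s'1 s'2 s1 by auto
    then have "s' \<le> s" unfolding s_def using bdd by (rule cSup_upper)
    then show ?thesis using s'1 by simp
  next
    case False
    then have "s = t2" using s2 by simp
    then show ?thesis using w'' by auto
  qed
qed

lemma par_chord:
  assumes "c \<noteq> d" "q \<in> D2"
  shows "\<exists>z1 z2. z1 \<in> S1 \<and> z2 \<in> S1 \<and> F c d z1 = F c d q \<and> F c d z2 = F c d q \<and> q \<in> closed_segment z1 z2"
proof -
  define u where "u = d - c"
  have u0: "norm u > 0" unfolding u_def using assms by simp
  define R where "R = 2 / norm u"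
  have R0: "R > 0" unfolding R_def using u0 by simp
  define g where "g = (\<lambda>s::real. norm (q + of_real s * u))"
  have gc: "continuous_on A g" for A unfolding g_def by (intro continuous_intros)
  have g0: "g 0 \<le> 1" unfolding g_def using assms by simp
  have gR: "g R \<ge> 1" "g (-R) \<ge> 1"
  proof -
    have nq: "norm q \<le> 1" using assms by simp
    have "norm (of_real R * u) = R * norm u" using R0 by (simp add: norm_mult)
    also have "R * norm u = 2" unfolding R_def using u0 by simp
    finally have n1: "norm (of_real R * u) = 2" .
    have "norm (of_real R * u) - norm (- q) \<le> norm (of_real R * u - - q)" by (rule norm_triangle_ineq2)
    then have "2 - norm q \<le> norm (q + of_real R * u)" using n1 by (simp add: add.commute)
    then show "g R \<ge> 1" unfolding g_def using nq by simp
    have "norm (of_real (-R) * u) = R * norm u" using R0 by (simp add: norm_mult)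
    also have "R * norm u = 2" unfolding R_def using u0 by simp
    finally have n2: "norm (of_real (-R) * u) = 2" .
    have "norm (of_real (-R) * u) - norm (- q) \<le> norm (of_real (-R) * u - - q)" by (rule norm_triangle_ineq2)
    then have "2 - norm q \<le> norm (q + of_real (-R) * u)" using n2 by (simp add: add.commute)
    then show "g (-R) \<ge> 1" unfolding g_def using nq by simp
  qed
  obtain s2 where s2: "0 \<le> s2" "s2 \<le> R" "g s2 = 1" using IVT'[of g 0 1 R] g0 gR R0 gc by auto
  obtain s1 where s1: "-R \<le> s1" "s1 \<le> 0" "g s1 = 1" using IVT2'[of g 0 1 "-R"] g0 gR R0 gc by auto
  define z1 where "z1 = q + of_real s1 * u"
  define z2 where "z2 = q + of_real s2 * u"
  have Fz: "F c d (q + of_real s * u) = F c d q" for s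
  proof -
    have uu: "u * cnj u = of_real ((norm u)^2)" by (rule complex_norm_square[symmetric])
    have "of_real s * u * cnj u = of_real s * (u * cnj u)" by (simp add: mult.assoc)
    also have "\<dots> = of_real (s * (norm u)^2)" unfolding uu by simp
    finally have "Im (of_real s * u * cnj u) = 0" by simp
    then show ?thesis using F_shift[of c d q "of_real s * u"] unfolding u_def by simp
  qed
  have "q \<in> closed_segment z1 z2"
  proof (cases "s1 = s2")
    case True
    then have "s1 = 0" "s2 = 0" using s1 s2 by auto
    then show ?thesis unfolding z1_def z2_def by simp
  next
    case False
    then have lt: "s1 < s2" using s1 s2 by simp
    define l where "l = - s1 / (s2 - s1)"
    have l: "0 \<le> l" "l \<le> 1" unfolding l_def using lt s1 s2 by (auto simp: field_simps)
    have z0: "(1 - l) * s1 + l * s2 = 0" unfolding l_def using lt by (simp add: field_simps)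
    have "(1 - l) *\<^sub>R z1 + l *\<^sub>R z2 = q + of_real ((1 - l) * s1 + l * s2) * u"
      unfolding z1_def z2_def scaleR_conv_of_real by (simp add: algebra_simps)
    also have "\<dots> = q" unfolding z0 by simp
    finally show ?thesis using l unfolding closed_segment_def by blast
  qed
  moreover have "z1 \<in> S1" "z2 \<in> S1" using s1 s2 unfolding z1_def z2_def g_def by auto
  ultimately show ?thesis using Fz unfolding z1_def z2_def by blast
qed

lemma halfplane_geo:
  assumes "closed C" "c \<in> S1" "d \<in> S1" "c \<noteq> d" "closed_segment c d \<subseteq> C" "\<forall>q\<in>C. F c d q \<ge> 0"
  shows "geodesic_side C {c,d}"
proof -
  have "closed_segment c d \<subseteq> frontier C"
  proof
    fix y assume y: "y \<in> closed_segment c d"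
    then have "y \<in> closure C" using assms(5) closure_subset by blast
    moreover have "y \<notin> interior C" using halfplane_not_interior[OF assms(4,6)] segment_F y by blast
    ultimately show "y \<in> frontier C" unfolding frontier_def by blast
  qed
  then show ?thesis unfolding geodesic_side_def using assms by blast
qed

lemma nontriv_point:
  assumes "C \<subseteq> D2" "\<not> (\<exists>a b. a \<noteq> b \<and> a \<in> S1 \<and> b \<in> S1 \<and> C = closed_segment a b)"
    "c \<in> S1" "d \<in> S1" "c \<noteq> d" "closed_segment c d \<subseteq> C"
  shows "\<exists>q\<in>C. F c d q \<noteq> 0"
proof (rule ccontr)
  assume "\<not> ?thesis"
  then have "C \<subseteq> closed_segment c d" using chord_line assms by blast
  then show False using assms by blast
qed

definition Pp :: "complex \<Rightarrow> real \<Rightarrow> complex" where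
  "Pp a0 t = - a0 * cis t"

lemma Pp_S1: "a0 \<in> S1 \<Longrightarrow> Pp a0 t \<in> S1"
  unfolding Pp_def by (simp add: norm_mult)

lemma Pp_pi: "a0 \<in> S1 \<Longrightarrow> Pp a0 pi = a0" "a0 \<in> S1 \<Longrightarrow> Pp a0 (-pi) = a0"
  unfolding Pp_def by (simp_all add: complex_eq_iff)

lemma Pp_Arg: "a0 \<in> S1 \<Longrightarrow> z \<in> S1 \<Longrightarrow> Pp a0 (Arg (z / (- a0))) = z"
proof -
  assume a: "a0 \<in> S1" "z \<in> S1"
  then have "z / (- a0) \<in> S1" by (simp add: norm_divide)
  then have "cis (Arg (z / (- a0))) = z / (- a0)" by (rule S1_cis)
  moreover have "a0 \<noteq> 0" using a by auto
  ultimately show ?thesis unfolding Pp_def by simp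
qed

lemma Pp_F: "a0 \<in> S1 \<Longrightarrow> F (Pp a0 s) (Pp a0 t) (Pp a0 r) = 4 * sin ((r-s)/2) * sin ((t-s)/2) * sin ((r-t)/2)"
  unfolding Pp_def by (rule FP) (simp add: norm_minus_cancel)

lemma Pp_F_cis: "a0 \<in> S1 \<Longrightarrow> F (Pp a0 s) (Pp a0 t) (Pp a0 r) = F (cis s) (cis t) (cis r)"
  using Pp_F F_trig by simp

lemma Pp_neg:
  assumes "a0 \<in> S1" "s \<in> {-pi<..pi}" "t \<in> {-pi<..pi}" "r \<in> {-pi<..pi}"
  shows "F (Pp a0 s) (Pp a0 t) (Pp a0 r) < 0 \<longleftrightarrow> (s < t \<and> s < r \<and> r < t) \<or> (t < s \<and> (r < t \<or> s < r))"
proof -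
  have "F (Pp a0 s) (Pp a0 t) (Pp a0 r) < 0 \<longleftrightarrow> (r-s)*(t-s)*(r-t) < 0"
    using sgn_F_cis[OF assms(2-4)] Pp_F_cis[OF assms(1)] sgn_neg_iff by metis
  then show ?thesis using prod3_neg by simp
qed

lemma Pp_pos:
  assumes "a0 \<in> S1" "s \<in> {-pi<..pi}" "t \<in> {-pi<..pi}" "r \<in> {-pi<..pi}"
  shows "F (Pp a0 s) (Pp a0 t) (Pp a0 r) > 0 \<longleftrightarrow> (t < s \<and> t < r \<and> r < s) \<or> (s < t \<and> (r < s \<or> t < r))"
proof -
  have "F (Pp a0 s) (Pp a0 t) (Pp a0 r) > 0 \<longleftrightarrow> F (Pp a0 t) (Pp a0 s) (Pp a0 r) < 0"
    using F_swap[of "Pp a0 s" "Pp a0 t" "Pp a0 r"] by linarith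
  then show ?thesis using Pp_neg[OF assms(1,3,2,4)] by simp
qed

lemma FI_aux:
  assumes L: "prelamination L" "x0 \<in> D2 - Geo L" and a0: "a0 \<in> S1" "a0 \<in> Cp L x0"
    and w: "{w1,w2} \<in> L" and lt: "Arg (w1 / (- a0)) < Arg (w2 / (- a0))"
  shows "\<exists>u v. -pi \<le> u \<and> u < v \<and> v \<le> pi \<and> {w1,w2} = {Pp a0 u, Pp a0 v} \<and>
     (\<forall>r\<in>{-pi<..pi}. F w1 w2 (Pp a0 r) * F w1 w2 x0 < 0 \<longleftrightarrow> u < r \<and> r < v)"
proof -
  define s where "s = Arg (w1 / (- a0))"
  define t where "t = Arg (w2 / (- a0))"
  have wS: "w1 \<in> S1" "w2 \<in> S1" "w1 \<noteq> w2" using prelam_leaf[OF L(1) w] by auto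
  have Pw: "Pp a0 s = w1" "Pp a0 t = w2" unfolding s_def t_def using Pp_Arg a0 wS by auto
  have st: "s < t" "s \<in> {-pi<..pi}" "t \<in> {-pi<..pi}" using lt Arg_range unfolding s_def t_def by auto
  have Fx: "F w1 w2 x0 \<noteq> 0" using R0 L w by blast
  have Fa: "F w1 w2 a0 * F w1 w2 x0 \<ge> 0" using Cp_mem[OF a0(2) w] .
  have neg: "F w1 w2 (Pp a0 r) < 0 \<longleftrightarrow> s < r \<and> r < t" if "r \<in> {-pi<..pi}" for r
    using Pp_neg[OF a0(1) st(2,3) that] st(1) Pw by auto
  have pos: "F w1 w2 (Pp a0 r) > 0 \<longleftrightarrow> r < s \<or> t < r" if "r \<in> {-pi<..pi}" for r
    using Pp_pos[OF a0(1) st(2,3) that] st(1) Pw by auto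
  show ?thesis
  proof (cases "t < pi")
    case True
    have "F w1 w2 a0 > 0" using pos[of pi] True Pp_pi[OF a0(1)] by simp
    then have Fxp: "F w1 w2 x0 > 0" using Fa Fx by (simp add: zero_le_mult_iff)
    have "\<forall>r\<in>{-pi<..pi}. F w1 w2 (Pp a0 r) * F w1 w2 x0 < 0 \<longleftrightarrow> s < r \<and> r < t"
      using neg Fxp by (simp add: mult_less_0_iff)
    then show ?thesis using st Pw by (intro exI[of _ s] exI[of _ t]) auto
  next
    case False
    then have tpi: "t = pi" using st by simp
    show ?thesis
    proof (cases "F w1 w2 x0 > 0")
      case True
      have "\<forall>r\<in>{-pi<..pi}. F w1 w2 (Pp a0 r) * F w1 w2 x0 < 0 \<longleftrightarrow> s < r \<and> r < t"
        using neg True by (simp add: mult_less_0_iff)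
      then show ?thesis using st Pw tpi by (intro exI[of _ s] exI[of _ t]) auto
    next
      case False
      then have Fxn: "F w1 w2 x0 < 0" using Fx by simp
      have "\<forall>r\<in>{-pi<..pi}. F w1 w2 (Pp a0 r) * F w1 w2 x0 < 0 \<longleftrightarrow> -pi < r \<and> r < s"
        using pos Fxn tpi by (auto simp: mult_less_0_iff)
      moreover have "{w1,w2} = {Pp a0 (-pi), Pp a0 s}" using Pw tpi Pp_pi[OF a0(1)] by auto
      ultimately show ?thesis using st by (intro exI[of _ "-pi"] exI[of _ s]) auto
    qed
  qed
qed

lemma FI:
  assumes L: "prelamination L" "x0 \<in> D2 - Geo L" and a0: "a0 \<in> S1" "a0 \<in> Cp L x0"
    and w: "w \<in> L"
  shows "\<exists>u v. -pi \<le> u \<and> u < v \<and> v \<le> pi \<and> w = {Pp a0 u, Pp a0 v} \<and>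
     (\<forall>r\<in>{-pi<..pi}. \<forall>w1 w2. w = {w1,w2} \<longrightarrow> (F w1 w2 (Pp a0 r) * F w1 w2 x0 < 0 \<longleftrightarrow> u < r \<and> r < v))"
proof -
  obtain w1 w2 where w12: "w = {w1,w2}" "w1 \<in> S1" "w2 \<in> S1" "w1 \<noteq> w2"
    using w L(1) unfolding prelamination_def using leaf_ex by blast
  have inv: "F b a z * F b a x0 = F a b z * F a b x0" for a b z using F_swap[of a b] by simp
  have rep: "\<And>v1 v2. w = {v1,v2} \<Longrightarrow> (v1 = w1 \<and> v2 = w2) \<or> (v1 = w2 \<and> v2 = w1)"
    using w12(1) w12(4) by (auto simp: doubleton_eq_iff)
  have "Arg (w1 / (- a0)) \<noteq> Arg (w2 / (- a0))"
    using Pp_Arg[OF a0(1) w12(2)] Pp_Arg[OF a0(1) w12(3)] w12(4) by metis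
  then consider "Arg (w1 / (- a0)) < Arg (w2 / (- a0))" | "Arg (w2 / (- a0)) < Arg (w1 / (- a0))"
    by linarith
  then show ?thesis
  proof cases
    case 1
    obtain u v where uv: "-pi \<le> u" "u < v" "v \<le> pi" "{w1,w2} = {Pp a0 u, Pp a0 v}"
      "\<forall>r\<in>{-pi<..pi}. F w1 w2 (Pp a0 r) * F w1 w2 x0 < 0 \<longleftrightarrow> u < r \<and> r < v"
      using FI_aux[OF L a0 _ 1] w w12 by blast
    have "\<forall>r\<in>{-pi<..pi}. \<forall>v1 v2. w = {v1,v2} \<longrightarrow> (F v1 v2 (Pp a0 r) * F v1 v2 x0 < 0 \<longleftrightarrow> u < r \<and> r < v)"
    proof (intro ballI allI impI)
      fix r v1 v2 assume r: "r \<in> {-pi<..pi}" and wv: "w = {v1,v2}"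
      from rep[OF wv] show "F v1 v2 (Pp a0 r) * F v1 v2 x0 < 0 \<longleftrightarrow> u < r \<and> r < v"
      proof
        assume "v1 = w1 \<and> v2 = w2" then show ?thesis using uv(5) r by simp
      next
        assume "v1 = w2 \<and> v2 = w1" then show ?thesis using uv(5) r inv[of w1 w2] by simp
      qed
    qed
    then show ?thesis using uv w12(1) by blast
  next
    case 2
    have w': "{w2,w1} \<in> L" using w w12 by (simp add: insert_commute)
    obtain u v where uv: "-pi \<le> u" "u < v" "v \<le> pi" "{w2,w1} = {Pp a0 u, Pp a0 v}"
      "\<forall>r\<in>{-pi<..pi}. F w2 w1 (Pp a0 r) * F w2 w1 x0 < 0 \<longleftrightarrow> u < r \<and> r < v"
      using FI_aux[OF L a0 w' 2] by blast
    have "\<forall>r\<in>{-pi<..pi}. \<forall>v1 v2. w = {v1,v2} \<longrightarrow> (F v1 v2 (Pp a0 r) * F v1 v2 x0 < 0 \<longleftrightarrow> u < r \<and> r < v)"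
    proof (intro ballI allI impI)
      fix r v1 v2 assume r: "r \<in> {-pi<..pi}" and wv: "w = {v1,v2}"
      from rep[OF wv] show "F v1 v2 (Pp a0 r) * F v1 v2 x0 < 0 \<longleftrightarrow> u < r \<and> r < v"
      proof
        assume "v1 = w1 \<and> v2 = w2" then show ?thesis using uv(5) r inv[of w2 w1] by simp
      next
        assume "v1 = w2 \<and> v2 = w1" then show ?thesis using uv(5) r by simp
      qed
    qed
    moreover have "w = {Pp a0 u, Pp a0 v}" using uv(4) w12(1) by (simp add: insert_commute)
    ultimately show ?thesis using uv by blast
  qed
qed

lemma nest_aux:
  assumes L: "prelamination L" and a0: "a0 \<in> S1"
    and w: "{Pp a0 u, Pp a0 v} \<in> L" and w': "{Pp a0 u', Pp a0 v'} \<in> L"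
    and o: "-pi \<le> u" "u < u'" "u' < v" "v < v'" "v' \<le> pi"
    and tb: "-pi < tb" "tb < pi" "\<not> (u < tb \<and> tb < v)" "\<not> (u' < tb \<and> tb < v')"
  shows False
proof -
  let ?P = "Pp a0"
  have S: "?P u \<in> S1" "?P v \<in> S1" "?P u' \<in> S1" "?P v' \<in> S1" using Pp_S1 a0 by auto
  have d: "?P u \<noteq> ?P v" "?P u' \<noteq> ?P v'" using prelam_leaf[OF L w] prelam_leaf[OF L w'] by auto
  have not_both: "\<not> (u = -pi \<and> v' = pi)"
  proof
    assume "u = -pi \<and> v' = pi"
    then show False using tb o by linarith
  qed
  have s1: "sin ((u'-u)/2) > 0" using o by (intro sin_half_pos) auto
  have s2: "sin ((v-u)/2) > 0" using o by (intro sin_half_pos) auto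
  have s3: "sin ((u'-v)/2) < 0" using o by (intro sin_half_neg) auto
  have s4: "sin ((v'-u)/2) > 0" using o not_both by (intro sin_half_pos) auto
  have s5: "sin ((v'-v)/2) > 0" using o by (intro sin_half_pos) auto
  have A: "F (?P u) (?P v) (?P u') < 0"
    unfolding Pp_F[OF a0] using s1 s2 s3 by (simp add: mult_pos_neg mult_pos_pos)
  have B: "F (?P u) (?P v) (?P v') > 0"
    unfolding Pp_F[OF a0] using s4 s2 s5 by (simp add: mult_pos_pos)
  have "F (?P u) (?P v) (?P u') * F (?P u) (?P v) (?P v') < 0" using A B by (simp add: mult_neg_pos)
  then have "crosses {?P u', ?P v'} {?P u, ?P v}" using crosses_iff S d by blast
  then show False using L w w' unfolding prelamination_def by blast
qed

lemma nested:
  assumes L: "prelamination L" and a0: "a0 \<in> S1"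
    and w: "{Pp a0 u, Pp a0 v} \<in> L" and w': "{Pp a0 u', Pp a0 v'} \<in> L"
    and o: "-pi \<le> u" "u < v" "v \<le> pi" "-pi \<le> u'" "u' < v'" "v' \<le> pi"
    and tb: "-pi < tb" "tb < pi" "\<not> (u < tb \<and> tb < v)" "\<not> (u' < tb \<and> tb < v')"
    and ov: "\<exists>t. u < t \<and> t < v \<and> u' < t \<and> t < v'"
  shows "(u \<le> u' \<and> v' \<le> v) \<or> (u' \<le> u \<and> v \<le> v')"
proof (rule ccontr)
  assume nn: "\<not> ?thesis"
  obtain t where t: "u < t" "t < v" "u' < t" "t < v'" using ov by blast
  consider "u < u'" | "u' < u" using nn by fastforce
  then show False
  proof cases
    case 1
    then have "v < v'" using nn by auto
    then show False using nest_aux[OF L a0 w w' o(1) 1 _ _ o(6) tb] t by linarith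
  next
    case 2
    then have "v' < v" using nn by auto
    then show False using nest_aux[OF L a0 w' w o(4) 2 _ _ o(3) tb(1,2,4,3)] t by linarith
  qed
qed

lemma leaf_in_cap:
  assumes L: "prelamination L" "x0 \<in> D2 - Geo L"
    and nt: "\<not> (\<exists>a b. a \<noteq> b \<and> a \<in> S1 \<and> b \<in> S1 \<and> Cp L x0 = closed_segment a b)"
    and o: "oside (Cp L x0) a0 b0" and y: "y \<in> L"
  shows "\<exists>c d. oside (Cp L x0) c d \<and> (\<forall>z\<in>y. F c d z \<le> 0)"
proof -
  define C where "C = Cp L x0"
  have a0: "a0 \<in> S1" "a0 \<in> C" and b0: "b0 \<in> S1" "b0 \<in> C" "a0 \<noteq> b0"
    using o oside_ends[OF o] unfolding oside_def C_def by auto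
  define P where "P = Pp a0"
  define Q where "Q = (\<lambda>w u v. -pi \<le> u \<and> u < v \<and> v \<le> pi \<and> w = {P u, P v} \<and>
     (\<forall>r\<in>{-pi<..pi}. \<forall>w1 w2. w = {w1,w2} \<longrightarrow> (F w1 w2 (P r) * F w1 w2 x0 < 0 \<longleftrightarrow> u < r \<and> r < v)))"
  have FIQ: "\<exists>u v. Q w u v" if "w \<in> L" for w
    using FI[OF L a0(1) _ that] a0 unfolding Q_def P_def C_def by blast
  define uu where "uu = (\<lambda>w. SOME u. \<exists>v. Q w u v)"
  define vv where "vv = (\<lambda>w. SOME v. Q w (uu w) v)"
  have Qw: "Q w (uu w) (vv w)" if "w \<in> L" for w
  proof -
    have "\<exists>v. Q w (uu w) v" unfolding uu_def using someI_ex[OF FIQ[OF that]] .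
    then show ?thesis unfolding vv_def by (rule someI_ex)
  qed
  have PS: "P t \<in> S1" for t unfolding P_def using Pp_S1[OF a0(1)] .
  have Ppi: "P pi = a0" "P (-pi) = a0" unfolding P_def using Pp_pi[OF a0(1)] by auto
  have memT: "P r \<in> C \<longleftrightarrow> (\<forall>w\<in>L. \<not> (uu w < r \<and> r < vv w))" if r: "r \<in> {-pi<..pi}" for r
  proof
    assume PC: "P r \<in> C"
    show "\<forall>w\<in>L. \<not> (uu w < r \<and> r < vv w)"
    proof (intro ballI notI)
      fix w assume w: "w \<in> L" and uv: "uu w < r \<and> r < vv w"
      obtain w1 w2 where w12: "w = {w1,w2}" using w L(1) leaf_ex unfolding prelamination_def by blast
      have "F w1 w2 (P r) * F w1 w2 x0 < 0" using Qw[OF w] r uv w12 unfolding Q_def by blast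
      moreover have "F w1 w2 (P r) * F w1 w2 x0 \<ge> 0" using Cp_mem PC w w12 unfolding C_def by blast
      ultimately show False by simp
    qed
  next
    assume nf: "\<forall>w\<in>L. \<not> (uu w < r \<and> r < vv w)"
    show "P r \<in> C" unfolding C_def Cp_def
    proof (intro CollectI conjI allI impI)
      show "P r \<in> D2" using PS[of r] by simp
      fix a b assume ab: "{a,b} \<in> L"
      have "\<not> (F a b (P r) * F a b x0 < 0)" using Qw[OF ab] nf ab r unfolding Q_def by blast
      then show "F a b (P r) * F a b x0 \<ge> 0" by simp
    qed
  qed
  define T where "T = {-pi..pi} \<inter> P -` C"
  have Pc: "continuous_on A P" for A unfolding P_def Pp_def by (intro continuous_intros)
  have clT: "closed T" unfolding T_def C_def by (rule continuous_closed_preimage[OF Pc closed_atLeastAtMost closed_Cp])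
  have piT: "-pi \<in> T" "pi \<in> T" unfolding T_def using Ppi a0 by auto
  define tb where "tb = Arg (b0 / (- a0))"
  have Ptb: "P tb = b0" unfolding tb_def P_def using Pp_Arg a0 b0 by auto
  have tbr: "-pi < tb" "tb < pi"
  proof -
    show "-pi < tb" unfolding tb_def by (rule mpi_less_Arg)
    have "tb \<le> pi" unfolding tb_def by (rule Arg_le_pi)
    moreover have "tb \<noteq> pi" using Ptb Ppi b0 by auto
    ultimately show "tb < pi" by simp
  qed
  have tbT: "\<forall>w\<in>L. \<not> (uu w < tb \<and> tb < vv w)" using memT[of tb] tbr Ptb b0 by auto
  have tbT': "tb \<in> T" unfolding T_def using tbr Ptb b0 by auto
  define U where "U = uu y"
  define V where "V = vv y"
  have QY: "-pi \<le> U" "U < V" "V \<le> pi" "y = {P U, P V}" using Qw[OF y] unfolding Q_def U_def V_def by auto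
  define A1 where "A1 = T \<inter> {-pi..U}"
  define A2 where "A2 = T \<inter> {V..pi}"
  have A1ne: "A1 \<noteq> {}" "bdd_above A1" "closed A1" unfolding A1_def using piT QY clT
    by (auto intro!: bdd_aboveI[of _ U] closed_Int)
  have A2ne: "A2 \<noteq> {}" "bdd_below A2" "closed A2" unfolding A2_def using piT QY clT
    by (auto intro!: bdd_belowI[of _ V] closed_Int)
  define d1 where "d1 = Sup A1"
  define d2 where "d2 = Inf A2"
  have d1A: "d1 \<in> A1" unfolding d1_def using closed_contains_Sup A1ne by blast
  have d2A: "d2 \<in> A2" unfolding d2_def using closed_contains_Inf A2ne by blast
  have d1p: "-pi \<le> d1" "d1 \<le> U" "d1 \<in> T" using d1A unfolding A1_def by auto
  have d2p: "V \<le> d2" "d2 \<le> pi" "d2 \<in> T" using d2A unfolding A2_def by auto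
  have Tb: "-pi \<le> t \<and> t \<le> pi" if "t \<in> T" for t using that unfolding T_def by auto
  have gap: "t \<notin> T" if t: "d1 < t" "t < d2" for t
  proof
    assume tT: "t \<in> T"
    consider "t \<le> U" | "U < t \<and> t < V" | "V \<le> t" by linarith
    then show False
    proof cases
      case 1
      then have "t \<in> A1" unfolding A1_def using tT Tb[OF tT] by auto
      then have "t \<le> d1" unfolding d1_def using A1ne(2) by (rule cSup_upper)
      then show False using t by simp
    next
      case 3
      then have "t \<in> A2" unfolding A2_def using tT Tb[OF tT] by auto
      then have "d2 \<le> t" unfolding d2_def using A2ne(2) by (rule cInf_lower)
      then show False using t by simp
    next
      case 2
      have tr: "t \<in> {-pi<..pi}" using 2 QY by auto
      have "P t \<in> C" using tT unfolding T_def by auto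
      then show False using memT[OF tr] y 2 unfolding U_def V_def by auto
    qed
  qed
  have nb: "\<not> (d1 = -pi \<and> d2 = pi)" using gap[of tb] tbT' tbr by auto
  have dd: "0 < d2 - d1" "d2 - d1 < 2*pi" using nb d1p d2p QY by auto
  define c where "c = P d1"
  define d where "d = P d2"
  have sB: "sin ((d2 - d1)/2) > 0" using dd by (intro sin_half_pos) auto
  have FcdP: "F c d (P r) = 4 * sin ((r - d1)/2) * sin ((d2 - d1)/2) * sin ((r - d2)/2)" for r
    unfolding c_def d_def P_def using Pp_F[OF a0(1)] .
  have sgap_le: "F c d (P r) \<le> 0" if "d1 \<le> r" "r \<le> d2" for r
  proof -
    have "sin ((r - d1)/2) \<ge> 0" using that dd by (intro sin_half_nonneg) auto
    moreover have "sin ((r - d2)/2) \<le> 0" using that dd by (intro sin_half_nonpos) auto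
    ultimately show ?thesis unfolding FcdP using sB by (simp add: mult_nonneg_nonpos)
  qed
  have sgap_lt: "F c d (P r) < 0" if "d1 < r" "r < d2" for r
  proof -
    have "sin ((r - d1)/2) > 0" using that dd by (intro sin_half_pos) auto
    moreover have "sin ((r - d2)/2) < 0" using that dd by (intro sin_half_neg) auto
    ultimately show ?thesis unfolding FcdP using sB by (simp add: mult_pos_neg)
  qed
  have sgap_ge: "F c d (P r) \<ge> 0" if "-pi \<le> r" "r \<le> pi" "\<not> (d1 < r \<and> r < d2)" for r
  proof (cases "r \<le> d1")
    case True
    have "sin ((r - d1)/2) \<le> 0" using that True d1p dd QY by (intro sin_half_nonpos) auto
    moreover have "sin ((r - d2)/2) \<le> 0" using that True d1p d2p dd QY by (intro sin_half_nonpos) auto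
    ultimately show ?thesis unfolding FcdP using sB by (simp add: mult_nonpos_nonpos)
  next
    case False
    then have r2: "d2 \<le> r" using that by simp
    have "sin ((r - d1)/2) \<ge> 0" using that r2 d1p dd QY by (intro sin_half_nonneg) auto
    moreover have "sin ((r - d2)/2) \<ge> 0" using that r2 d2p d1p QY by (intro sin_half_nonneg) auto
    ultimately show ?thesis unfolding FcdP using sB by simp
  qed
  have cd: "c \<noteq> d"
  proof
    assume "c = d"
    then have "F c d (P ((d1+d2)/2)) = 0" unfolding F_def by simp
    moreover have "F c d (P ((d1+d2)/2)) < 0" using dd by (intro sgap_lt) auto
    ultimately show False by simp
  qed
  have cdS: "c \<in> S1" "d \<in> S1" unfolding c_def d_def using PS by auto
  have cdC: "c \<in> C" "d \<in> C" unfolding c_def d_def using d1p d2p unfolding T_def by auto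
  have seg: "closed_segment c d \<subseteq> C"
    using closed_segment_subset[OF cdC] convex_Cp unfolding C_def by blast
  have nonneg: "\<forall>q\<in>C. F c d q \<ge> 0"
  proof (rule ccontr)
    assume "\<not> ?thesis"
    then obtain q where q: "q \<in> C" "F c d q < 0" by (auto simp: not_le)
    have qD: "q \<in> D2" using q unfolding C_def Cp_def by auto
    obtain z1 z2 where z: "z1 \<in> S1" "z2 \<in> S1" "F c d z1 = F c d q" "F c d z2 = F c d q"
      "q \<in> closed_segment z1 z2" using par_chord[OF cd qD] by blast
    define t1 where "t1 = Arg (z1 / (- a0))"
    define t2 where "t2 = Arg (z2 / (- a0))"
    have Pt: "P t1 = z1" "P t2 = z2" unfolding t1_def t2_def P_def using Pp_Arg a0 z by auto
    have tr: "t1 \<in> {-pi<..pi}" "t2 \<in> {-pi<..pi}" unfolding t1_def t2_def using Arg_range by auto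
    have tin: "d1 < t1 \<and> t1 < d2" "d1 < t2 \<and> t2 < d2"
      using sgap_ge[of t1] sgap_ge[of t2] tr Pt z q by (auto simp: not_le)
    define s1 where "s1 = min t1 t2"
    define s2 where "s2 = max t1 t2"
    have s12: "s1 \<le> s2" unfolding s1_def s2_def by simp
    have qs: "q \<in> closed_segment (P s1) (P s2)"
      using z(5) Pt unfolding s1_def s2_def by (cases "t1 \<le> t2") (auto simp: closed_segment_commute)
    have sin: "d1 < s1" "s2 < d2" "s1 \<in> {-pi<..pi}" "s2 \<in> {-pi<..pi}"
      using tin tr unfolding s1_def s2_def by auto
    have cov: "\<forall>t\<in>{s1..s2}. \<exists>w\<in>L. uu w < t \<and> t < vv w"
    proof
      fix t assume t: "t \<in> {s1..s2}"
      then have t': "d1 < t" "t < d2" using sin by auto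
      then have "t \<notin> T" by (rule gap)
      moreover have tr': "t \<in> {-pi<..pi}" using t' d1p d2p by auto
      ultimately have "P t \<notin> C" unfolding T_def by auto
      then show "\<exists>w\<in>L. uu w < t \<and> t < vv w" using memT[OF tr'] by blast
    qed
    have nest: "\<forall>w\<in>L. \<forall>w'\<in>L. (\<exists>t. uu w < t \<and> t < vv w \<and> uu w' < t \<and> t < vv w') \<longrightarrow>
        (uu w \<le> uu w' \<and> vv w' \<le> vv w) \<or> (uu w' \<le> uu w \<and> vv w \<le> vv w')"
    proof (intro ballI impI)
      fix w w' assume w: "w \<in> L" and w': "w' \<in> L" and ov: "\<exists>t. uu w < t \<and> t < vv w \<and> uu w' < t \<and> t < vv w'"
      have qw: "-pi \<le> uu w" "uu w < vv w" "vv w \<le> pi" "w = {P (uu w), P (vv w)}" using Qw[OF w] unfolding Q_def by auto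
      have qw': "-pi \<le> uu w'" "uu w' < vv w'" "vv w' \<le> pi" "w' = {P (uu w'), P (vv w')}" using Qw[OF w'] unfolding Q_def by auto
      show "(uu w \<le> uu w' \<and> vv w' \<le> vv w) \<or> (uu w' \<le> uu w \<and> vv w \<le> vv w')"
        using nested[OF L(1) a0(1), of "uu w" "vv w" "uu w'" "vv w'" tb] qw qw' w w' tbr tbT ov
        unfolding P_def by auto
    qed
    obtain w where w: "w \<in> L" "uu w < s1" "s2 < vv w" using cover_sup[OF cov nest s12] by blast
    obtain w1 w2 where w12: "w = {w1,w2}" using w L(1) leaf_ex unfolding prelamination_def by blast
    have far: "F w1 w2 (P s1) * F w1 w2 x0 < 0" "F w1 w2 (P s2) * F w1 w2 x0 < 0"
      using Qw[OF w(1)] w w12 sin s12 unfolding Q_def by auto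
    obtain l where l: "0 \<le> l" "l \<le> 1" "q = (1 - l) *\<^sub>R P s1 + l *\<^sub>R P s2"
      using qs unfolding closed_segment_def by blast
    have "F w1 w2 q * F w1 w2 x0 = (1 - l) * (F w1 w2 (P s1) * F w1 w2 x0) + l * (F w1 w2 (P s2) * F w1 w2 x0)"
      unfolding l(3) F_comb by (simp add: algebra_simps)
    moreover have "(1 - l) * (- (F w1 w2 (P s1) * F w1 w2 x0)) + l * (- (F w1 w2 (P s2) * F w1 w2 x0)) > 0"
      using pos_comb[OF l(1,2), of "- (F w1 w2 (P s1) * F w1 w2 x0)" "- (F w1 w2 (P s2) * F w1 w2 x0)"] far by linarith
    ultimately have "F w1 w2 q * F w1 w2 x0 < 0" by (simp add: algebra_simps)
    moreover have "F w1 w2 q * F w1 w2 x0 \<ge> 0" using Cp_mem q w w12 unfolding C_def by blast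
    ultimately show False by simp
  qed
  have gs: "geodesic_side C {c,d}"
    using halfplane_geo[OF _ cdS cd seg nonneg] closed_Cp unfolding C_def by blast
  obtain q where q: "q \<in> C" "F c d q \<noteq> 0"
    using nontriv_point[OF _ nt[folded C_def] cdS cd seg] unfolding C_def Cp_def by blast
  then have "F c d q > 0" using nonneg by (simp add: order_le_neq_trans)
  then have "\<exists>q\<in>C. F c d q > 0" using q by blast
  then have os: "oside C c d" unfolding oside_def using cdS cd seg nonneg by blast
  have "\<forall>z\<in>y. F c d z \<le> 0"
  proof
    fix z assume "z \<in> y"
    then have "z = P U \<or> z = P V" using QY by auto
    then show "F c d z \<le> 0" using sgap_le d1p d2p QY by auto
  qed
  then show ?thesis using os unfolding C_def by blast
qed

lemma oside_unique: "oside C a b \<Longrightarrow> oside C b a \<Longrightarrow> False"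
proof -
  assume o1: "oside C a b" and o2: "oside C b a"
  obtain c where c: "c \<in> C" "F a b c > 0" using o1 unfolding oside_def by blast
  have "F b a c \<ge> 0" using o2 c unfolding oside_def by blast
  then show False using c F_swap[of a b c] by simp
qed

lemma oside_eq: "oside C a b \<Longrightarrow> oside C c d \<Longrightarrow> {a,b} = {c,d} \<Longrightarrow> a = c \<and> b = d"
  using oside_unique by (auto simp: doubleton_eq_iff)

lemma oside_S1: "oside C a b \<Longrightarrow> a \<in> S1 \<and> b \<in> S1 \<and> a \<noteq> b"
  unfolding oside_def by auto

lemma leaf_of: "prelamination L \<Longrightarrow> z \<in> L \<Longrightarrow> \<exists>z1 z2. z = {z1,z2} \<and> z1 \<in> S1 \<and> z2 \<in> S1 \<and> z1 \<noteq> z2"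
  unfolding prelamination_def using leaf_ex by blast

lemma side_edge:
  assumes "closed C" "oside C a b" "oside C c d" "{a,b} \<noteq> {c,d}" "l \<in> L'"
    "crosses l {a,b}" "crosses l {c,d}"
  shows "linkage_edge C L' (Inl {a,b}) (Inl {c,d})"
  unfolding linkage_edge_def linkage_vertex_def leaf_meets_def
  using oside_geo[OF assms(1,2)] oside_geo[OF assms(1,3)] assms by auto

lemma two_subset:
  assumes "w1 \<noteq> w2" "{w1,w2} \<subseteq> {a,b}" "{w1,w2} \<subseteq> {c,d}"
  shows "{a,b} = {c,d}"
  using assms by auto

lemma world:
  assumes L: "prelamination L" "x0 \<in> D2 - Geo L" and L': "prelamination L'"
    and nt: "\<not> (\<exists>a b. a \<noteq> b \<and> a \<in> S1 \<and> b \<in> S1 \<and> Cp L x0 = closed_segment a b)"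
    and chain: "\<forall>l\<in>L \<union> L'. \<forall>m\<in>L \<union> L'. (\<lambda>x y. x \<in> L \<union> L' \<and> y \<in> L \<union> L' \<and> crosses x y)\<^sup>*\<^sup>* l m"
    and oa: "oside (Cp L x0) a0 b0" and ob: "oside (Cp L x0) c0 d0"
  shows "(linkage_edge (Cp L x0) L')\<^sup>*\<^sup>* (Inl {a0,b0}) (Inl {c0,d0})"
proof (rule ccontr)
  define C where "C = Cp L x0"
  define R where "R = (\<lambda>s. (linkage_edge C L')\<^sup>*\<^sup>* (Inl {a0,b0}) (Inl s))"
  assume nR0: "\<not> ?thesis"
  then have nR: "\<not> R {c0,d0}" unfolding R_def C_def .
  have clC: "closed C" unfolding C_def by (rule closed_Cp)
  have oa': "oside C a0 b0" and ob': "oside C c0 d0" using oa ob unfolding C_def by auto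
  define W where "W = (\<lambda>z. (\<exists>a b. oside C a b \<and> R {a,b} \<and> (\<forall>p\<in>z. F a b p \<le> 0)) \<or>
                         (\<exists>a b. oside C a b \<and> R {a,b} \<and> crosses z {a,b}))"
  have Lnc: "\<not> crosses z {a,b}" if zab: "z \<in> L" "oside C a b" for z a b
  proof
    assume cr: "crosses z {a,b}"
    obtain z1 z2 where z: "z = {z1,z2}" "z1 \<in> S1" "z2 \<in> S1" "z1 \<noteq> z2" using leaf_of[OF L(1) zab(1)] by blast
    have "F a b z1 * F a b z2 \<ge> 0" using leaf_not_cross_side[OF L] zab z unfolding C_def by blast
    moreover have "F a b z1 * F a b z2 < 0" using crosses_iff z oside_S1[OF zab(2)] cr by blast
    ultimately show False by simp
  qed
  obtain k1a k1b where k1: "{k1a,k1b} \<in> L" "F a0 b0 k1a \<le> 0" "F a0 b0 k1b \<le> 0"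
    using side_has_leaf[OF L oa] by blast
  have Wk1: "W {k1a,k1b}" unfolding W_def R_def using oa' k1 by blast
  obtain k2a k2b where k2: "{k2a,k2b} \<in> L" "F c0 d0 k2a \<le> 0" "F c0 d0 k2b \<le> 0"
    using side_has_leaf[OF L ob] by blast
  have nWk2: "\<not> W {k2a,k2b}"
  proof
    assume "W {k2a,k2b}"
    then consider (cap) a b where "oside C a b" "R {a,b}" "\<forall>p\<in>{k2a,k2b}. F a b p \<le> 0"
      | (cr) a b where "oside C a b" "R {a,b}" "crosses {k2a,k2b} {a,b}"
      unfolding W_def by blast
    then show False
    proof cases
      case cap
      have k2S: "k2a \<in> S1" "k2b \<in> S1" "k2a \<noteq> k2b" using prelam_leaf[OF L(1) k2(1)] by auto
      show False
      proof (cases "{a,b} = {c0,d0}")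
        case True then show False using cap nR by simp
      next
        case False
        have abS: "a \<in> S1" "b \<in> S1" "a \<noteq> b" using oside_S1[OF cap(1)] by auto
        have cdS: "c0 \<in> S1" "d0 \<in> S1" "c0 \<noteq> d0" using oside_S1[OF ob'] by auto
        have g1: "F a b c0 \<ge> 0" "F a b d0 \<ge> 0" using cap(1) oside_ends[OF ob'] unfolding oside_def by auto
        have g2: "F c0 d0 a \<ge> 0" "F c0 d0 b \<ge> 0" using ob' oside_ends[OF cap(1)] unfolding oside_def by auto
        have inab: "p \<in> {a,b}" "p \<in> {c0,d0}" if p: "p \<in> {k2a,k2b}" for p
        proof -
          have pS: "p \<in> S1" using p k2S by auto
          have le1: "F a b p \<le> 0" using cap(3) p by blast
          have le2: "F c0 d0 p \<le> 0" using k2 p by auto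
          have "\<not> F a b p < 0" using caps_disjoint[OF abS(1,2) cdS(1,2) pS abS(3) cdS(3) False g1 g2] le2 by auto
          then have "F a b p = 0" using le1 by simp
          then show "p \<in> {a,b}" using F_S1_zero_iff abS pS by auto
          have "\<not> F c0 d0 p < 0"
            using caps_disjoint[OF cdS(1,2) abS(1,2) pS cdS(3) abS(3) _ g2 g1] False le1 by auto
          then have "F c0 d0 p = 0" using le2 by simp
          then show "p \<in> {c0,d0}" using F_S1_zero_iff cdS pS by auto
        qed
        have "{a,b} = {c0,d0}" using two_subset[OF k2S(3)] inab by blast
        then show False using False by simp
      qed
    next
      case cr
      then show False using Lnc k2(1) by blast
    qed
  qed
  have Wstep: "W z'" if Wz: "W z" and zz: "z \<in> L \<union> L'" "z' \<in> L \<union> L'" and crz: "crosses z z'" for z z'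
  proof -
    have "\<exists>z1 z2. z = {z1,z2} \<and> z1 \<in> S1 \<and> z2 \<in> S1 \<and> z1 \<noteq> z2"
      using zz(1) leaf_of[OF L(1)] leaf_of[OF L'] by blast
    then obtain z1 z2 where z: "z = {z1,z2}" "z1 \<in> S1" "z2 \<in> S1" "z1 \<noteq> z2" by blast
    have "\<exists>p q. z' = {p,q} \<and> p \<in> S1 \<and> q \<in> S1 \<and> p \<noteq> q"
      using zz(2) leaf_of[OF L(1)] leaf_of[OF L'] by blast
    then obtain p q where z': "z' = {p,q}" "p \<in> S1" "q \<in> S1" "p \<noteq> q" by blast
    have X1: "F p q z1 * F p q z2 < 0" using crosses_iff z z' crz by blast
    then have X2: "F z1 z2 p * F z1 z2 q < 0" using cross_sym[OF z'(2,3) z(2,3) z'(4) z(4)] by simp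
    from Wz consider (cap) a b where "oside C a b" "R {a,b}" "\<forall>x\<in>z. F a b x \<le> 0"
      | (cr) a b where "oside C a b" "R {a,b}" "crosses z {a,b}"
      unfolding W_def by blast
    then show "W z'"
    proof cases
      case cap
      have abS: "a \<in> S1" "b \<in> S1" "a \<noteq> b" using oside_S1[OF cap(1)] by auto
      have "F a b p < 0 \<or> F a b q < 0"
        using cap_cross[OF abS(1,2) z(2,3) z'(2,3) abS(3) z(4) _ _ X2] cap(3) z by auto
      show "W z'"
      proof (cases "F a b p \<le> 0 \<and> F a b q \<le> 0")
        case True
        then show ?thesis unfolding W_def using cap z' by blast
      next
        case False
        then have "F a b p * F a b q < 0" using \<open>F a b p < 0 \<or> F a b q < 0\<close>
          by (auto simp: mult_less_0_iff)
        then have "crosses z' {a,b}" using crosses_iff z' abS by blast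
        then show ?thesis unfolding W_def using cap by blast
      qed
    next
      case cr
      have abS: "a \<in> S1" "b \<in> S1" "a \<noteq> b" using oside_S1[OF cr(1)] by auto
      have zL': "z \<in> L'" using zz(1) Lnc cr by blast
      have z'L: "z' \<in> L"
      proof (rule ccontr)
        assume "z' \<notin> L"
        then have "z' \<in> L'" using zz(2) by blast
        then show False using L' zL' crz unfolding prelamination_def by blast
      qed
      have Y: "F a b z1 * F a b z2 < 0" using crosses_iff z abS cr(3) by blast
      show "W z'"
      proof (cases "F a b p \<le> 0 \<and> F a b q \<le> 0")
        case True
        then show ?thesis unfolding W_def using cr z' by blast
      next
        case False
        obtain c d where cd: "oside (Cp L x0) c d" "\<forall>x\<in>z'. F c d x \<le> 0"
          using leaf_in_cap[OF L nt oa z'L] by blast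
        have cd': "oside C c d" using cd(1) unfolding C_def .
        have cdS: "c \<in> S1" "d \<in> S1" "c \<noteq> d" using oside_S1[OF cd'] by auto
        have ne: "{a,b} \<noteq> {c,d}"
        proof
          assume "{a,b} = {c,d}"
          then have "a = c \<and> b = d" using oside_eq[OF cr(1) cd'] by blast
          then show False using False cd z' by auto
        qed
        have g1: "F a b c \<ge> 0" "F a b d \<ge> 0" using cr(1) oside_ends[OF cd'] unfolding oside_def by auto
        have g2: "F c d a \<ge> 0" "F c d b \<ge> 0" using cd' oside_ends[OF cr(1)] unfolding oside_def by auto
        have cc: "F c d z1 < 0 \<or> F c d z2 < 0"
          using cap_cross[OF cdS(1,2) z'(2,3) z(2,3) cdS(3) z'(4) _ _ X1] cd z' by auto
        have "F c d z1 * F c d z2 < 0"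
        proof (cases "F c d z1 < 0")
          case True
          have "F a b z1 > 0" using caps_disjoint[OF cdS(1,2) abS(1,2) z(2) cdS(3) abS(3) _ g2 g1 True] ne by auto
          then have "F a b z2 < 0" using Y by (simp add: mult_less_0_iff)
          then have "F c d z2 > 0" using caps_disjoint[OF abS(1,2) cdS(1,2) z(3) abS(3) cdS(3) ne g1 g2] by auto
          then show ?thesis using True by (simp add: mult_neg_pos)
        next
          case False
          then have F2: "F c d z2 < 0" using cc by simp
          have "F a b z2 > 0" using caps_disjoint[OF cdS(1,2) abS(1,2) z(3) cdS(3) abS(3) _ g2 g1 F2] ne by auto
          then have "F a b z1 < 0" using Y by (simp add: mult_less_0_iff)
          then have "F c d z1 > 0" using caps_disjoint[OF abS(1,2) cdS(1,2) z(2) abS(3) cdS(3) ne g1 g2] by auto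
          then show ?thesis using F2 by (simp add: mult_pos_neg)
        qed
        then have "crosses z {c,d}" using crosses_iff z cdS by blast
        then have edge: "linkage_edge C L' (Inl {a,b}) (Inl {c,d})"
          using side_edge[OF clC cr(1) cd' ne zL' cr(3)] by blast
        have "R {c,d}" unfolding R_def by (rule rtranclp.rtrancl_into_rtrancl[OF cr(2)[unfolded R_def] edge])
        then show ?thesis unfolding W_def using cd' cd(2) by blast
      qed
    qed
  qed
  have "(\<lambda>x y. x \<in> L \<union> L' \<and> y \<in> L \<union> L' \<and> crosses x y)\<^sup>*\<^sup>* {k1a,k1b} {k2a,k2b}"
    using chain k1(1) k2(1) by blast
  then have "W {k2a,k2b}"
  proof (induction rule: rtranclp_induct)
    case base
    then show ?case by (rule Wk1)
  next
    case (step y z)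
    then show ?case using Wstep by blast
  qed
  then show False using nWk2 by simp
qed

lemma edge_sym: "linkage_edge C L' u v \<Longrightarrow> linkage_edge C L' v u"
  unfolding linkage_edge_def by blast

lemma region_Cp:
  assumes "nontrivial_region L C" "prelamination L"
  shows "\<exists>x0. x0 \<in> D2 - Geo L \<and> C = Cp L x0 \<and>
     \<not> (\<exists>a b. a \<noteq> b \<and> a \<in> S1 \<and> b \<in> S1 \<and> C = closed_segment a b)"
proof -
  obtain x0 where x0: "x0 \<in> D2 - Geo L" "C = closure (connected_component_set (D2 - Geo L) x0)"
    using assms(1) unfolding nontrivial_region_def compl_region_def by blast
  then have "C = Cp L x0" using closure_K[OF assms(2) x0(1)] by simp
  then show ?thesis using x0 assms(1) unfolding nontrivial_region_def by blast
qed

lemma vertex_side: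
  assumes L: "prelamination L" "x0 \<in> D2 - Geo L"
    and nt: "\<not> (\<exists>a b. a \<noteq> b \<and> a \<in> S1 \<and> b \<in> S1 \<and> Cp L x0 = closed_segment a b)"
    and u: "linkage_vertex (Cp L x0) L' u"
  shows "\<exists>a b. oside (Cp L x0) a b \<and> (linkage_edge (Cp L x0) L')\<^sup>*\<^sup>* u (Inl {a,b}) \<and>
      (linkage_edge (Cp L x0) L')\<^sup>*\<^sup>* (Inl {a,b}) u"
proof -
  define C where "C = Cp L x0"
  have cl: "closed C" and cv: "convex C" and sub: "C \<subseteq> D2"
    unfolding C_def using closed_Cp convex_Cp by (auto simp: Cp_def)
  have nt': "\<not> (\<exists>a b. a \<noteq> b \<and> a \<in> S1 \<and> b \<in> S1 \<and> C = closed_segment a b)" using nt unfolding C_def .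
  show ?thesis
  proof (cases u)
    case (Inl s)
    then have "geodesic_side C s" using u unfolding linkage_vertex_def C_def by simp
    then obtain a b where "s = {a,b}" "oside C a b" using side_oside[OF cl cv sub nt'] by blast
    then show ?thesis using Inl unfolding C_def by blast
  next
    case (Inr I)
    then have "ideal_segment C L' I" using u unfolding linkage_vertex_def C_def by simp
    then obtain s where s: "geodesic_side C s" "dense_arc_for L' s I" unfolding ideal_segment_def by blast
    obtain a b where ab: "s = {a,b}" "oside C a b" using side_oside[OF cl cv sub nt' s(1)] by blast
    have d: "int_S1 I \<noteq> {}" "int_S1 I \<subseteq> closure (cross_endpoints L' s \<inter> int_S1 I)"
      using s(2) unfolding dense_arc_for_def by auto
    have "cross_endpoints L' s \<inter> int_S1 I \<noteq> {}" using d by auto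
    then obtain x l where xl: "l \<in> L'" "crosses l s" "x \<in> l" "x \<in> int_S1 I"
      unfolding cross_endpoints_def by blast
    have e: "linkage_edge C L' (Inr I) (Inl s)"
      unfolding linkage_edge_def linkage_vertex_def leaf_meets_def
      using u Inr s(1) xl unfolding linkage_vertex_def C_def by auto
    then have "linkage_edge C L' (Inl s) (Inr I)" by (rule edge_sym)
    then show ?thesis using e ab Inr unfolding C_def by (intro exI[of _ a] exI[of _ b]) auto
  qed
qed

lemma main_conn:
  assumes L: "prelamination L" and L': "prelamination L'"
    and chain: "\<forall>l\<in>L \<union> L'. \<forall>m\<in>L \<union> L'. (\<lambda>x y. x \<in> L \<union> L' \<and> y \<in> L \<union> L' \<and> crosses x y)\<^sup>*\<^sup>* l m"
    and nr: "nontrivial_region L C"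
  shows "linkage_connected C L'"
proof -
  obtain x0 where x0: "x0 \<in> D2 - Geo L" "C = Cp L x0"
    and nt: "\<not> (\<exists>a b. a \<noteq> b \<and> a \<in> S1 \<and> b \<in> S1 \<and> C = closed_segment a b)"
    using region_Cp[OF nr L] by blast
  have nt': "\<not> (\<exists>a b. a \<noteq> b \<and> a \<in> S1 \<and> b \<in> S1 \<and> Cp L x0 = closed_segment a b)" using nt x0 by simp
  show ?thesis unfolding linkage_connected_def
  proof (intro allI impI)
    fix u v assume uv: "linkage_vertex C L' u \<and> linkage_vertex C L' v"
    obtain a b where ab: "oside (Cp L x0) a b" "(linkage_edge (Cp L x0) L')\<^sup>*\<^sup>* u (Inl {a,b})"
      using vertex_side[OF L x0(1) nt'] uv x0(2) by blast
    obtain c d where cd: "oside (Cp L x0) c d" "(linkage_edge (Cp L x0) L')\<^sup>*\<^sup>* (Inl {c,d}) v"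
      using vertex_side[OF L x0(1) nt'] uv x0(2) by blast
    have "(linkage_edge (Cp L x0) L')\<^sup>*\<^sup>* (Inl {a,b}) (Inl {c,d})"
      by (rule world[OF L x0(1) L' nt' chain ab(1) cd(1)])
    then have "(linkage_edge (Cp L x0) L')\<^sup>*\<^sup>* u v"
      using ab(2) cd(2) by (meson rtranclp_trans)
    then show "(linkage_edge C L')\<^sup>*\<^sup>* u v" using x0(2) by simp
  qed
qed

theorem lemma3p12:
  assumes "fully_transverse Lp Lm"
  shows "(\<forall>C. nontrivial_region Lp C \<longrightarrow> linkage_connected C Lm) \<and>
         (\<forall>C. nontrivial_region Lm C \<longrightarrow> linkage_connected C Lp)"
proof -
  have P: "prelamination Lp" "prelamination Lm" using assms unfolding fully_transverse_def by auto
  have ch: "\<forall>l\<in>Lp \<union> Lm. \<forall>m\<in>Lp \<union> Lm. (\<lambda>x y. x \<in> Lp \<union> Lm \<and> y \<in> Lp \<union> Lm \<and> crosses x y)\<^sup>*\<^sup>* l m"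
    using assms unfolding fully_transverse_def by blast
  have ch': "\<forall>l\<in>Lm \<union> Lp. \<forall>m\<in>Lm \<union> Lp. (\<lambda>x y. x \<in> Lm \<union> Lp \<and> y \<in> Lm \<union> Lp \<and> crosses x y)\<^sup>*\<^sup>* l m"
    using ch by (simp add: Un_commute)
  show ?thesis using main_conn[OF P(1) P(2) ch] main_conn[OF P(2) P(1) ch'] by blast
qed

end
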